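(* Let $F_0\in\mathcal F$. For all $x\in(1/3,1/2)$ and all integers $t\ge 0$, $$F_{4,t}(x)\le F_0(x)\cdot\left[1-4\left(\tfrac12 - F_0\!\left(\tfrac{x}{3}+\tfrac13\right)\right)^3\right]^t.$$
   Context: Voters form a continuum uniformly distributed on $[0,1]$. Candidates occupy points of $[0,1]$ and each voter votes for the nearest candidate. For candidates at distinct positions, the vote share of a candidate is the measure of the set of voters closer to it than to any other candidate: half the distance between its left and right neighbours, where a leftmost candidate at $y$ additionally receives all of $[0,y]$ and a rightmost candidate at $y$ additionally receives all of $[y,1]$. The plurality winner is the candidate with largest vote share, ties broken uniformly at random. Write $\mathrm{plurality}(x_1,\dots,x_k)$ for the (random) position of the plurality winner. Replicator dynamics: given a probability distribution $F_0$ on $[0,1]$ (identified with its CDF) and an integer $k\ge 2$, set $F_{k,0}=F_0$, and for $t\ge 1$ let $F_{k,t}(x)=\Pr(\mathrm{plurality}(X_{1,t},\dots,X_{k,t})\le x)$, where $X_{1,t},\dots,X_{k,t}$ are i.i.d. with distribution $F_{k,t-1}$. $\mathcal F$ denotes the set of probability distributions on $[0,1]$ that are symmetric about $1/2$ and atomless (continuous CDF). *)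

theory Defs
  imports "HOL-Probability.Probability"
begin

definition vote_share :: "nat \<Rightarrow> (nat \<Rightarrow> real) \<Rightarrow> nat \<Rightarrow> real" where
  "vote_share k xs i =
     measure lborel {v \<in> {0..1}. \<forall>j<k. j \<noteq> i \<longrightarrow> \<bar>v - xs i\<bar> < \<bar>v - xs j\<bar>}"

definition plurality_set :: "nat \<Rightarrow> (nat \<Rightarrow> real) \<Rightarrow> nat set" where
  "plurality_set k xs = {i. i < k \<and> (\<forall>j<k. vote_share k xs j \<le> vote_share k xs i)}"

definition win_prob :: "nat \<Rightarrow> (nat \<Rightarrow> real) \<Rightarrow> nat \<Rightarrow> real" where
  "win_prob k xs i =
     (if i \<in> plurality_set k xs then 1 / real (card (plurality_set k xs)) else 0)"

text \<open>One step of the replicator dynamics: distribution of the position of the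
  plurality winner among k i.i.d. candidates drawn from M.\<close>
definition plurality_step :: "nat \<Rightarrow> real measure \<Rightarrow> real measure" where
  "plurality_step k M =
     measure_of UNIV (sets borel)
       (\<lambda>A. \<integral>\<^sup>+ xs. ennreal (\<Sum>i<k. win_prob k xs i * indicator A (xs i))
              \<partial>(PiM {..<k} (\<lambda>_. M)))"

definition replicator_cdf :: "nat \<Rightarrow> nat \<Rightarrow> real measure \<Rightarrow> real \<Rightarrow> real" where
  "replicator_cdf k t M x = measure ((plurality_step k ^^ t) M) {..x}"

definition calF :: "real measure set" where
  "calF = {M. prob_space M \<and> sets M = sets borel \<and> measure M {0..1} = 1
             \<and> distr M borel (\<lambda>y. 1 - y) = M \<and> (\<forall>y. measure M {y} = 0)}"

end

theory Submission
  imports Defs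
begin

definition cell :: "nat \<Rightarrow> (nat \<Rightarrow> real) \<Rightarrow> nat \<Rightarrow> real set" where
  "cell k xs i = {v \<in> {0..1}. \<forall>j<k. j \<noteq> i \<longrightarrow> \<bar>v - xs i\<bar> < \<bar>v - xs j\<bar>}"

lemma vote_share_cell: "vote_share k xs i = measure lborel (cell k xs i)"
  by (simp add: vote_share_def cell_def)

lemma cell_sets[measurable]: "cell k xs i \<in> sets borel"
proof -
  have "cell k xs i = {v \<in> space borel. v \<in> {0..1} \<and> (\<forall>j\<in>{..<k}. j \<noteq> i \<longrightarrow> \<bar>v - xs i\<bar> < \<bar>v - xs j\<bar>)}"
    unfolding cell_def by auto
  also have "\<dots> \<in> sets borel" by measurable
  finally show ?thesis .
qed

lemma cell_sub: "cell k xs i \<subseteq> {0..1}" by (auto simp: cell_def)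

lemma cell_fmeas: "cell k xs i \<in> fmeasurable lborel"
  by (rule fmeasurableI2[of "{0..1}"]) (use fmeasurable_cbox[of "0::real" 1] in \<open>auto simp: cell_sub\<close>)

lemma share_le_of_sub:
  assumes "cell k xs i \<subseteq> {a..b}" "a \<le> b"
  shows "vote_share k xs i \<le> b - a"
proof -
  have "vote_share k xs i \<le> measure lborel {a..b}"
    unfolding vote_share_cell by (rule measure_mono_fmeasurable) (use assms fmeasurable_cbox[of a b] in auto)
  thus ?thesis using assms by simp
qed

lemma share_ge_of_sub:
  assumes "{a<..b} \<subseteq> cell k xs i" "a \<le> b"
  shows "b - a \<le> vote_share k xs i"
proof -
  have "measure lborel {a<..b} \<le> vote_share k xs i"
    unfolding vote_share_cell by (rule measure_mono_fmeasurable) (use assms cell_fmeas in auto)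
  thus ?thesis using assms by simp
qed

lemma share_nonneg: "0 \<le> vote_share k xs i"
  by (simp add: vote_share_def)

lemma V2:
  assumes "j < k" "j \<noteq> i" "xs i < xs j" "0 \<le> xs i"
  shows "vote_share k xs i \<le> xs i / 2 + xs j / 2"
proof -
  have "cell k xs i \<subseteq> {0..(xs i + xs j)/2}"
  proof
    fix v assume "v \<in> cell k xs i"
    then have "v \<in> {0..1}" "\<bar>v - xs i\<bar> < \<bar>v - xs j\<bar>" using assms by (auto simp: cell_def)
    then show "v \<in> {0..(xs i + xs j)/2}" using assms by (auto simp: abs_if split: if_splits)
  qed
  from share_le_of_sub[OF this] assms show ?thesis by simp
qed

lemma V3:
  assumes "j < k" "j \<noteq> i" "l < k" "l \<noteq> i" "xs l < xs i" "xs i < xs j"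
  shows "vote_share k xs i \<le> xs j / 2 - xs l / 2"
proof -
  have "cell k xs i \<subseteq> {(xs i + xs l)/2..(xs i + xs j)/2}"
  proof
    fix v assume "v \<in> cell k xs i"
    then have "\<bar>v - xs i\<bar> < \<bar>v - xs j\<bar>" "\<bar>v - xs i\<bar> < \<bar>v - xs l\<bar>" using assms by (auto simp: cell_def)
    then show "v \<in> {(xs i + xs l)/2..(xs i + xs j)/2}" using assms by (auto simp: abs_if split: if_splits)
  qed
  from share_le_of_sub[OF this] assms show ?thesis by (simp add: field_simps)
qed

lemma V1:
  assumes "\<And>j. j < k \<Longrightarrow> j \<noteq> i \<Longrightarrow> xs j \<le> l" "l < xs i" "xs i \<le> 1" "0 \<le> l"
  shows "1 - xs i / 2 - l / 2 \<le> vote_share k xs i"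
proof -
  have "{(xs i + l)/2<..1} \<subseteq> cell k xs i"
  proof
    fix v assume v: "v \<in> {(xs i + l)/2<..1}"
    show "v \<in> cell k xs i" unfolding cell_def
    proof (intro CollectI conjI allI impI)
      show "v \<in> {0..1}" using v assms by auto
      fix j assume "j < k" "j \<noteq> i"
      then have "xs j \<le> l" using assms by auto
      then show "\<bar>v - xs i\<bar> < \<bar>v - xs j\<bar>" using v assms by (auto simp: abs_if)
    qed
  qed
  from share_ge_of_sub[OF this] assms show ?thesis by (simp add: add_divide_distrib)
qed

lemma cell_reflect: "cell k (\<lambda>j. 1 - xs j) i = (\<lambda>v. 1 - v) -` cell k xs i"
  unfolding cell_def by (auto simp: abs_minus_commute)

lemma lborel_reflect_measure:
  fixes A :: "real set"
  assumes "A \<in> sets borel"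
  shows "measure lborel ((\<lambda>v. 1 - v) -` A) = measure lborel A"
proof -
  have eq: "lborel = distr lborel borel (\<lambda>x::real. 1 - x)"
    using lborel_real_affine[of "-1" 1] by (simp add: density_1)
  have e1: "emeasure (distr lborel borel (\<lambda>x::real. 1 - x)) A = emeasure lborel ((\<lambda>v. 1 - v) -` A)"
    by (subst emeasure_distr) (auto simp: assms)
  then have "emeasure lborel A = emeasure lborel ((\<lambda>v. 1 - v) -` A)"
    by (simp add: eq[symmetric])
  thus ?thesis by (simp add: measure_def)
qed

lemma share_reflect: "vote_share k (\<lambda>j. 1 - xs j) i = vote_share k xs i"
  unfolding vote_share_cell cell_reflect by (rule lborel_reflect_measure) simp

lemma share_sum_le: "(\<Sum>i<k. vote_share k xs i) \<le> 1"
proof -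
  have "(\<Sum>i<k. vote_share k xs i) = measure lborel (\<Union>i\<in>{..<k}. cell k xs i)"
    unfolding vote_share_cell
  proof (rule measure_UNION'[symmetric])
    show "pairwise (\<lambda>i j. disjnt (cell k xs i) (cell k xs j)) {..<k}"
      unfolding pairwise_def disjnt_def cell_def by fastforce
  qed (auto simp: cell_fmeas)
  also have "\<dots> \<le> measure lborel {0..(1::real)}"
    by (rule measure_mono_fmeasurable) (use fmeasurable_cbox[of "0::real" 1] in \<open>auto simp: cell_def\<close>)
  finally show ?thesis by simp
qed

lemma plurality_set_sub: "plurality_set k xs \<subseteq> {..<k}"
  by (auto simp: plurality_set_def)

lemma plurality_set_ne: "0 < k \<Longrightarrow> plurality_set k xs \<noteq> {}"
proof -
  assume k: "0 < k"
  let ?f = "vote_share k xs"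
  have "Max (?f ` {..<k}) \<in> ?f ` {..<k}" using k by (intro Max_in) auto
  then obtain i where i: "i < k" "?f i = Max (?f ` {..<k})" by auto
  then have "i \<in> plurality_set k xs" by (auto simp: plurality_set_def)
  thus ?thesis by auto
qed

lemma win_nonneg: "0 \<le> win_prob k xs i" by (simp add: win_prob_def)

lemma win_le1: "win_prob k xs i \<le> 1"
proof -
  have fin: "finite (plurality_set k xs)" using plurality_set_sub finite_subset by blast
  show ?thesis
  proof (cases "i \<in> plurality_set k xs")
    case True
    then have "card (plurality_set k xs) \<noteq> 0" using fin by auto
    then have "1 \<le> real (card (plurality_set k xs))" by linarith
    then show ?thesis using True by (simp add: win_prob_def)
  qed (simp add: win_prob_def)
qed

lemma win_sum: assumes "0 < k" shows "(\<Sum>i<k. win_prob k xs i) = 1"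
proof -
  let ?S = "plurality_set k xs"
  have fin: "finite ?S" using plurality_set_sub finite_subset by blast
  have ne: "?S \<noteq> {}" using plurality_set_ne[OF assms] .
  have "(\<Sum>i<k. win_prob k xs i) = (\<Sum>i\<in>{..<k} \<inter> ?S. 1 / real (card ?S))"
    unfolding win_prob_def by (rule sum.inter_restrict[symmetric]) simp
  also have "{..<k} \<inter> ?S = ?S" using plurality_set_sub by blast
  finally show ?thesis using fin ne by simp
qed

lemma win_lose: assumes "j < k" "vote_share k xs i < vote_share k xs j"
  shows "win_prob k xs i = 0"
proof -
  have "i \<notin> plurality_set k xs" using assms by (auto simp: plurality_set_def)
  thus ?thesis by (simp add: win_prob_def)
qed

lemma win_reflect: "win_prob k (\<lambda>j. 1 - xs j) i = win_prob k xs i"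
proof -
  have "plurality_set k (\<lambda>j. 1 - xs j) = plurality_set k xs"
    by (simp add: plurality_set_def share_reflect)
  thus ?thesis by (simp add: win_prob_def)
qed

lemma win_unique:
  assumes "i < k" "\<And>j. j < k \<Longrightarrow> j \<noteq> i \<Longrightarrow> vote_share k xs j < vote_share k xs i" "j < k" "j \<noteq> i"
  shows "win_prob k xs j = 0"
  using win_lose assms by blast


locale xloc = fixes x :: real assumes x1: "1/3 < x" and x2: "x < 1/2"
begin

lemma G23:
  assumes dist: "\<And>i j. i<k \<Longrightarrow> j<k \<Longrightarrow> i\<noteq>j \<Longrightarrow> xs i \<noteq> xs j"
    and rng: "\<And>i. i<k \<Longrightarrow> 0 \<le> xs i \<and> xs i \<le> 1"
    and noR: "\<And>i. i<k \<Longrightarrow> xs i < 1 - x"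
    and m: "m<k" "x < xs m" "\<And>j. j<k \<Longrightarrow> xs j \<le> xs m"
    and ab: "a<k" "b<k" "a\<noteq>b" "xs a \<le> x" "xs b \<le> x"
    and j: "j<k" "xs j \<le> x"
  shows "win_prob k xs j = 0"
proof -
  let ?T = "{..<k} - {m}"
  define l2 where "l2 = Max (xs ` ?T)"
  have aT: "a \<in> ?T" using ab m by auto
  have finT: "finite (xs ` ?T)" by simp
  have neT: "xs ` ?T \<noteq> {}" using aT by auto
  have "l2 \<in> xs ` ?T" unfolding l2_def using finT neT by (rule Max_in)
  then obtain j0 where j0: "j0 < k" "j0 \<noteq> m" "l2 = xs j0" by auto
  have l2lt: "l2 < xs m" using j0 dist[of j0 m] m by force
  have l2ge: "\<And>j'. j' < k \<Longrightarrow> j' \<noteq> m \<Longrightarrow> xs j' \<le> l2"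
    unfolding l2_def using finT by (intro Max_ge) auto
  have l2r: "0 \<le> l2" "l2 < 1 - x" using j0 rng noR by auto
  have sm: "1 - xs m / 2 - l2 / 2 \<le> vote_share k xs m"
    by (rule V1) (use l2ge l2lt l2r rng m in auto)
  have xm: "xs m < 1 - x" using noR m by auto
  have smx: "x < vote_share k xs m" using sm l2r xm by linarith
  define jo where "jo = (if j = a then b else a)"
  have o: "jo < k" "jo \<noteq> j" "xs jo \<le> x" using ab by (auto simp: jo_def)
  have jm: "j \<noteq> m" "xs j < xs m" using j m by auto
  have "vote_share k xs j < vote_share k xs m"
  proof (cases "xs jo < xs j")
    case True
    have "vote_share k xs j \<le> xs m / 2 - xs jo / 2"
      by (rule V3) (use True jm o m in auto)
    also have "\<dots> < x" using rng[of jo] o xm x1 by auto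
    finally show ?thesis using smx by linarith
  next
    case False
    then have "xs j < xs jo" using dist[of j jo] o j by force
    have "vote_share k xs j \<le> xs j / 2 + xs jo / 2"
      by (rule V2) (use \<open>xs j < xs jo\<close> o rng j in auto)
    also have "\<dots> \<le> x" using o j by auto
    finally show ?thesis using smx by linarith
  qed
  thus ?thesis using win_lose m by blast
qed

lemma G1:
  assumes dist: "\<And>i j. i<4 \<Longrightarrow> j<4 \<Longrightarrow> i\<noteq>j \<Longrightarrow> xs i \<noteq> xs j"
    and rng: "\<And>i. i<4 \<Longrightarrow> 0 \<le> xs i \<and> xs i \<le> 1"
    and a: "a < 4" "xs a \<le> x"
    and ins: "\<And>j. j<4 \<Longrightarrow> j \<noteq> a \<Longrightarrow> x < xs j"
    and sum: "xs a + (\<Sum>j\<in>{..<4} - {a}. xs j) < 2"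
  shows "win_prob 4 xs a = 0"
proof -
  let ?T = "{..<4::nat} - {a}"
  have cT: "card ?T = 3" using a by simp
  have fT: "finite ?T" by simp
  have neT: "?T \<noteq> {}" using cT by (intro notI) simp
  have "Max (xs ` ?T) \<in> xs ` ?T" using neT fT by (intro Max_in) auto
  then obtain j1 where j1: "j1 \<in> ?T" "xs j1 = Max (xs ` ?T)" by (metis imageE)
  have j1ge: "\<And>j. j \<in> ?T \<Longrightarrow> xs j \<le> xs j1" using j1 fT by simp
  let ?T2 = "?T - {j1}"
  have cT2: "card ?T2 = 2" using cT j1 by simp
  have neT2: "?T2 \<noteq> {}" using cT2 by (intro notI) simp
  have "Max (xs ` ?T2) \<in> xs ` ?T2" using neT2 fT by (intro Max_in) auto
  then obtain j2 where j2: "j2 \<in> ?T2" "xs j2 = Max (xs ` ?T2)" by (metis imageE)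
  have j2ge: "\<And>j. j \<in> ?T2 \<Longrightarrow> xs j \<le> xs j2" using j2 fT by simp
  let ?T3 = "?T2 - {j2}"
  have cT3: "card ?T3 = 1" using cT2 j2 by simp
  then obtain j3 where T3: "?T3 = {j3}" by (meson card_1_singletonE)
  have Teq: "?T = {j1, j2, j3}" using T3 j1 j2 by auto
  have d: "j1 \<noteq> j2" "j1 \<noteq> j3" "j2 \<noteq> j3" using T3 j1 j2 by auto
  have sT: "(\<Sum>j\<in>?T. xs j) = xs j1 + xs j2 + xs j3" unfolding Teq using d by simp
  have jin: "j1 < 4" "j2 < 4" "j3 < 4" "j1 \<noteq> a" "j2 \<noteq> a" "j3 \<noteq> a" using Teq by auto
  have l: "\<And>j. j < 4 \<Longrightarrow> j \<noteq> j1 \<Longrightarrow> xs j \<le> xs j2"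
  proof -
    fix j assume "j < (4::nat)" "j \<noteq> j1"
    show "xs j \<le> xs j2"
    proof (cases "j = a")
      case True thus ?thesis using a ins[of j2] jin by auto
    next
      case False thus ?thesis using j2ge \<open>j < 4\<close> \<open>j \<noteq> j1\<close> by auto
    qed
  qed
  have lt12: "xs j2 < xs j1" using j1ge[of j2] jin dist[of j1 j2] d by force
  have s1: "1 - xs j1 / 2 - xs j2 / 2 \<le> vote_share 4 xs j1"
    by (rule V1) (use l lt12 rng[of j1] rng[of j2] jin in auto)
  have s3: "vote_share 4 xs a \<le> xs a / 2 + xs j3 / 2"
    by (rule V2) (use jin ins[of j3] a rng[of a] in auto)
  have "vote_share 4 xs a < vote_share 4 xs j1" using s1 s3 sum sT by linarith
  thus ?thesis using win_lose jin by blast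
qed

end

context xloc begin

definition lL :: "real \<Rightarrow> real" where "lL y = indicator {..x} y"
definition lR :: "real \<Rightarrow> real" where "lR y = indicator {1-x..} y"
definition lI :: "real \<Rightarrow> real" where "lI y = indicator {x<..<1-x} y"

definition Good :: "(nat \<Rightarrow> real) \<Rightarrow> bool" where
  "Good xs \<longleftrightarrow> (\<forall>i<4. 0 \<le> xs i \<and> xs i \<le> 1) \<and> (\<forall>i<4. \<forall>j<4. i \<noteq> j \<longrightarrow> xs i \<noteq> xs j \<and> xs i \<noteq> 1 - xs j)"

definition KL :: "nat \<Rightarrow> (nat \<Rightarrow> real) \<Rightarrow> real" where
  "KL a xs = lL (xs a) * (\<Prod>j\<in>{..<4} - {a}. lI (xs j)) * (if 2 - x \<le> (\<Sum>j\<in>{..<4} - {a}. xs j) then 1 else 0)"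
definition KR :: "nat \<Rightarrow> (nat \<Rightarrow> real) \<Rightarrow> real" where
  "KR a xs = lR (xs a) * (\<Prod>j\<in>{..<4} - {a}. lI (xs j)) * (if (\<Sum>j\<in>{..<4} - {a}. xs j) \<le> 1 + x then 1 else 0)"

definition U :: "(nat \<Rightarrow> real) \<Rightarrow> real" where
  "U xs = (1 - (\<Prod>i<4. 1 - lR (xs i))) * (1 - (\<Prod>i<4. 1 - lL (xs i))) + (\<Prod>i<4. lL (xs i)) + (\<Prod>i<4. lR (xs i))
     + (\<Sum>a<4. KL a xs + KR a xs)"

lemma ind01: "0 \<le> lL y" "lL y \<le> 1" "0 \<le> lR y" "lR y \<le> 1" "0 \<le> lI y" "lI y \<le> 1"
  by (auto simp: lL_def lR_def lI_def indicator_def)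

lemma KL_nonneg: "0 \<le> KL a xs" and KR_nonneg: "0 \<le> KR a xs"
  unfolding KL_def KR_def by (auto intro!: mult_nonneg_nonneg prod_nonneg simp: ind01)

lemma prod01: "0 \<le> (\<Prod>i<4. lL (xs i))" "(\<Prod>i<4. 1 - lR (xs i)) \<le> 1" "(\<Prod>i<4. 1 - lL (xs i)) \<le> 1" "0 \<le> (\<Prod>i<4. lR (xs i))"
  "0 \<le> (\<Prod>i<4. 1 - lR (xs i))" "0 \<le> (\<Prod>i<4. 1 - lL (xs i))"
  by (auto intro!: prod_nonneg prod_le_1 simp: ind01)

lemma Good_refl: "Good xs \<Longrightarrow> Good (\<lambda>j. 1 - xs j)"
  unfolding Good_def by (auto, metis)

lemma claim1b:
  assumes G: "Good xs" and noR: "\<And>i. i < 4 \<Longrightarrow> xs i < 1 - x"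
  shows "(\<Sum>i<4. win_prob 4 xs i * lL (xs i)) \<le> (\<Prod>i<4. lL (xs i)) + (\<Sum>a<4. KL a xs)"
proof -
  have dist: "\<And>i j. i<4 \<Longrightarrow> j<4 \<Longrightarrow> i\<noteq>j \<Longrightarrow> xs i \<noteq> xs j" and rng: "\<And>i. i<4 \<Longrightarrow> 0 \<le> xs i \<and> xs i \<le> 1"
    using G by (auto simp: Good_def)
  have Kn: "0 \<le> (\<Sum>a<4. KL a xs)" by (intro sum_nonneg) (simp add: KL_nonneg)
  have Pn: "0 \<le> (\<Prod>i<4. lL (xs i))" by (rule prod01)
  show ?thesis
  proof (cases "\<forall>i<4. xs i \<le> x")
    case True
    then have "(\<Prod>i<4. lL (xs i)) = 1" by (simp add: lL_def)
    moreover have "(\<Sum>i<4. win_prob 4 xs i * lL (xs i)) \<le> (\<Sum>i<4. win_prob 4 xs i)"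
      by (intro sum_mono) (simp add: ind01 win_nonneg mult_left_le)
    ultimately show ?thesis using win_sum[of 4 xs] Kn by simp
  next
    case notall: False
    then obtain i0 where i0: "i0 < 4" "x < xs i0" by (auto simp: not_le)
    show ?thesis
    proof (cases "\<exists>a<4. \<exists>b<4. a \<noteq> b \<and> xs a \<le> x \<and> xs b \<le> x")
      case True
      then obtain a b where ab: "a<4" "b<4" "a\<noteq>b" "xs a \<le> x" "xs b \<le> x" by blast
      have "Max (xs ` {..<4}) \<in> xs ` {..<4}" by (intro Max_in) (auto simp: lessThan_empty_iff)
      then obtain m where m: "m < 4" "xs m = Max (xs ` {..<4})" by auto
      have mge: "\<And>j. j < 4 \<Longrightarrow> xs j \<le> xs m" using m by simp
      have mx: "x < xs m" using mge[OF i0(1)] i0 by linarith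
      have "(\<Sum>i<4. win_prob 4 xs i * lL (xs i)) = 0"
      proof (intro sum.neutral ballI)
        fix j assume j: "j \<in> {..<4::nat}"
        show "win_prob 4 xs j * lL (xs j) = 0"
        proof (cases "xs j \<le> x")
          case True
          have "win_prob 4 xs j = 0"
            by (rule G23[OF dist rng noR m(1) mx mge ab]) (use j True in auto)
          thus ?thesis by simp
        qed (simp add: lL_def)
      qed
      thus ?thesis using Kn Pn by simp
    next
      case False
      show ?thesis
      proof (cases "\<exists>a<4. xs a \<le> x")
        case False
        then have "(\<Sum>i<4. win_prob 4 xs i * lL (xs i)) = 0" by (intro sum.neutral) (auto simp: lL_def not_le)
        thus ?thesis using Kn Pn by simp
      next
        case True
        then obtain a where a: "a < 4" "xs a \<le> x" by blast
        have oth: "\<And>j. j < 4 \<Longrightarrow> j \<noteq> a \<Longrightarrow> x < xs j" using False a by force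
        have "(\<Sum>i<4. win_prob 4 xs i * lL (xs i)) = (\<Sum>i<4. if i = a then win_prob 4 xs a else 0)"
          by (intro sum.cong refl) (use a in \<open>auto simp: lL_def indicator_def dest: oth\<close>)
        also have "\<dots> = win_prob 4 xs a" using a by simp
        finally have L: "(\<Sum>i<4. win_prob 4 xs i * lL (xs i)) = win_prob 4 xs a" .
        have KLa: "KL a xs = (if 2 - x \<le> (\<Sum>j\<in>{..<4} - {a}. xs j) then 1 else 0)"
        proof -
          have "(\<Prod>j\<in>{..<4} - {a}. lI (xs j)) = 1"
            by (intro prod.neutral) (use oth noR in \<open>auto simp: lI_def\<close>)
          thus ?thesis using a by (simp add: KL_def lL_def)
        qed
        have KLle: "KL a xs \<le> (\<Sum>a<4. KL a xs)"
          by (rule member_le_sum) (use a in \<open>auto simp: KL_nonneg\<close>)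
        show ?thesis
        proof (cases "2 - x \<le> (\<Sum>j\<in>{..<4} - {a}. xs j)")
          case True
          then have "KL a xs = 1" using KLa by simp
          thus ?thesis using L KLle Pn win_le1[of 4 xs a] by linarith
        next
          case False
          have "win_prob 4 xs a = 0"
            by (rule G1[of xs a, OF dist rng a oth]) (use False a in auto)
          thus ?thesis using L Kn Pn by simp
        qed
      qed
    qed
  qed
qed

end

context xloc begin

lemma lL_refl: "lL (1 - y) = lR y" and lI_refl: "lI (1 - y) = lI y" and lR_refl: "lR (1 - y) = lL y"
  by (auto simp: lL_def lR_def lI_def indicator_def)

lemma KL_refl: assumes "a < 4" shows "KL a (\<lambda>j. 1 - xs j) = KR a xs"
proof -
  have c: "card ({..<4::nat} - {a}) = 3" using assms by simp
  have "(\<Sum>j\<in>{..<4} - {a}. 1 - xs j) = 3 - (\<Sum>j\<in>{..<4} - {a}. xs j)"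
    by (simp add: sum_subtractf c)
  then show ?thesis unfolding KL_def KR_def by (simp add: lL_refl lI_refl)
qed

lemma claim1:
  assumes G: "Good xs"
  shows "(\<Sum>i<4. win_prob 4 xs i * (lL (xs i) + lR (xs i))) \<le> U xs"
proof -
  have KLn: "0 \<le> (\<Sum>a<4. KL a xs)" by (intro sum_nonneg) (simp add: KL_nonneg)
  have KRn: "0 \<le> (\<Sum>a<4. KR a xs)" by (intro sum_nonneg) (simp add: KR_nonneg)
  have Ueq: "U xs = (1 - (\<Prod>i<4. 1 - lR (xs i))) * (1 - (\<Prod>i<4. 1 - lL (xs i))) + (\<Prod>i<4. lL (xs i)) + (\<Prod>i<4. lR (xs i))
     + (\<Sum>a<4. KL a xs) + (\<Sum>a<4. KR a xs)" unfolding U_def by (simp add: sum.distrib)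
  have p1: "0 \<le> (1 - (\<Prod>i<4. 1 - lR (xs i))) * (1 - (\<Prod>i<4. 1 - lL (xs i)))"
    using prod01[of xs] by (intro mult_nonneg_nonneg) auto
  show ?thesis
  proof (cases "(\<exists>i<4. xs i \<le> x) \<and> (\<exists>j<4. 1 - x \<le> xs j)")
    case True
    then obtain i j where ij: "i<4" "xs i \<le> x" "j<4" "1 - x \<le> xs j" by blast
    have P1: "(\<Prod>i<4. 1 - lR (xs i)) = 0" by (rule prod_zero) (use ij in \<open>force simp: lR_def\<close>)+
    have P2: "(\<Prod>i<4. 1 - lL (xs i)) = 0" by (rule prod_zero) (use ij in \<open>force simp: lL_def\<close>)+
    have L: "(\<Sum>i<4. win_prob 4 xs i * (lL (xs i) + lR (xs i))) \<le> (\<Sum>i<4. win_prob 4 xs i)"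
    proof (intro sum_mono)
      fix i
      have "lL (xs i) + lR (xs i) \<le> 1" using x2 by (auto simp: lL_def lR_def indicator_def)
      then show "win_prob 4 xs i * (lL (xs i) + lR (xs i)) \<le> win_prob 4 xs i"
        by (simp add: mult_left_le win_nonneg add_nonneg_nonneg ind01)
    qed
    have "U xs = 1 + (\<Prod>i<4. lL (xs i)) + (\<Prod>i<4. lR (xs i)) + (\<Sum>a<4. KL a xs) + (\<Sum>a<4. KR a xs)"
      unfolding Ueq P1 P2 by simp
    then show ?thesis using win_sum[of 4 xs] L prod01[of xs] KLn KRn by linarith
  next
    case False
    show ?thesis
    proof (cases "\<exists>j<4. 1 - x \<le> xs j")
      case False
      then have noR: "\<And>i. i < 4 \<Longrightarrow> xs i < 1 - x" by force
      have "(\<Sum>i<4. win_prob 4 xs i * (lL (xs i) + lR (xs i))) = (\<Sum>i<4. win_prob 4 xs i * lL (xs i))"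
        by (intro sum.cong refl) (auto simp: lR_def indicator_def dest: noR)
      also have "\<dots> \<le> (\<Prod>i<4. lL (xs i)) + (\<Sum>a<4. KL a xs)" by (rule claim1b[OF G noR])
      finally have L: "(\<Sum>i<4. win_prob 4 xs i * (lL (xs i) + lR (xs i))) \<le> (\<Prod>i<4. lL (xs i)) + (\<Sum>a<4. KL a xs)" .
      have "(\<Prod>i<4. 1 - lR (xs i)) = 1" by (intro prod.neutral) (auto simp: lR_def indicator_def dest: noR)
      then show ?thesis using L Ueq prod01[of xs] KRn by simp
    next
      case True
      with False have noL: "\<And>i. i < 4 \<Longrightarrow> x < xs i" by force
      let ?y = "\<lambda>j. 1 - xs j"
      have Gy: "Good ?y" using Good_refl[OF G] .
      have noRy: "\<And>i. i < 4 \<Longrightarrow> ?y i < 1 - x" using noL by force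
      have "(\<Sum>i<4. win_prob 4 xs i * (lL (xs i) + lR (xs i))) = (\<Sum>i<4. win_prob 4 ?y i * lL (?y i))"
      proof (intro sum.cong refl)
        fix i assume "i \<in> {..<4::nat}"
        then have "lL (xs i) = 0" using noL[of i] by (auto simp: lL_def)
        then show "win_prob 4 xs i * (lL (xs i) + lR (xs i)) = win_prob 4 ?y i * lL (?y i)"
          by (simp add: lL_refl win_reflect)
      qed
      also have "\<dots> \<le> (\<Prod>i<4. lL (?y i)) + (\<Sum>a<4. KL a ?y)" by (rule claim1b[OF Gy noRy])
      also have "\<dots> = (\<Prod>i<4. lR (xs i)) + (\<Sum>a<4. KR a xs)"
        by (simp add: lL_refl KL_refl)
      finally have L: "(\<Sum>i<4. win_prob 4 xs i * (lL (xs i) + lR (xs i))) \<le> (\<Prod>i<4. lR (xs i)) + (\<Sum>a<4. KR a xs)" .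
      have "(\<Prod>i<4. 1 - lL (xs i)) = 1" by (intro prod.neutral) (auto simp: lL_def indicator_def dest: noL)
      then show ?thesis using L Ueq prod01[of xs] KLn by simp
    qed
  qed
qed

end

definition flip :: "nat set \<Rightarrow> (nat \<Rightarrow> real) \<Rightarrow> nat \<Rightarrow> real" where
  "flip B xs = (\<lambda>i. if i \<in> B then 1 - xs i else xs i)"

lemma card_le2_of_sd:
  fixes F :: "'a set set"
  assumes fin: "finite F" and sd: "\<And>B B'. B \<in> F \<Longrightarrow> B' \<in> F \<Longrightarrow> card ((B - B') \<union> (B' - B)) \<le> 1"
    and finB: "\<And>B. B \<in> F \<Longrightarrow> finite B"
  shows "card F \<le> 2"
proof (cases "\<exists>B1 B2. B1 \<in> F \<and> B2 \<in> F \<and> B1 \<noteq> B2")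
  case False
  then have "F = {} \<or> (\<exists>B. F = {B})" by blast
  then show ?thesis by auto
next
  case True
  then obtain B1 B2 where B: "B1 \<in> F" "B2 \<in> F" "B1 \<noteq> B2" by blast
  have "F \<subseteq> {B1, B2}"
  proof
    fix B3 assume B3: "B3 \<in> F"
    show "B3 \<in> {B1, B2}"
    proof (rule ccontr)
      assume n: "B3 \<notin> {B1, B2}"
      have fin12: "finite ((B1 - B2) \<union> (B2 - B1))" using finB[OF B(1)] finB[OF B(2)] by simp
      have ne12: "(B1 - B2) \<union> (B2 - B1) \<noteq> {}" using B(3) by blast
      have c12: "card ((B1 - B2) \<union> (B2 - B1)) = 1"
        using sd[OF B(1,2)] fin12 ne12 card_gt_0_iff[of "(B1 - B2) \<union> (B2 - B1)"] by linarith
      have fin31: "finite ((B3 - B1) \<union> (B1 - B3))" using finB[OF B3] finB[OF B(1)] by simp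
      have ne31: "(B3 - B1) \<union> (B1 - B3) \<noteq> {}" using n by blast
      have c31: "card ((B3 - B1) \<union> (B1 - B3)) = 1"
        using sd[OF B3 B(1)] fin31 ne31 card_gt_0_iff[of "(B3 - B1) \<union> (B1 - B3)"] by linarith
      have fin32: "finite ((B3 - B2) \<union> (B2 - B3))" using finB[OF B3] finB[OF B(2)] by simp
      have ne32: "(B3 - B2) \<union> (B2 - B3) \<noteq> {}" using n by blast
      have c32: "card ((B3 - B2) \<union> (B2 - B3)) = 1"
        using sd[OF B3 B(2)] fin32 ne32 card_gt_0_iff[of "(B3 - B2) \<union> (B2 - B3)"] by linarith
      obtain j where j: "(B1 - B2) \<union> (B2 - B1) = {j}" using c12 card_1_singletonE by blast
      obtain l where l: "(B3 - B1) \<union> (B1 - B3) = {l}" using c31 card_1_singletonE by blast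
      obtain m where m: "(B3 - B2) \<union> (B2 - B3) = {m}" using c32 card_1_singletonE by blast
      have "(B1 - B2) \<union> (B2 - B1) = ({l} - {m}) \<union> ({m} - {l})"
        using l m by blast
      then show False using j by (cases "l = m") auto
    qed
  qed
  then have "card F \<le> card {B1, B2}" by (intro card_mono) auto
  also have "\<dots> \<le> 2" by (simp add: card_insert_if)
  finally show ?thesis .
qed

context xloc begin

definition cc :: real where "cc = x/3 + 1/3"
definition lC :: "real \<Rightarrow> real" where "lC y = indicator {cc<..<1-cc} y"

lemma flip_count:
  fixes T :: "nat set" and y :: "nat \<Rightarrow> real"
  assumes cT: "card T = 3" and yin: "\<And>j. j \<in> T \<Longrightarrow> x < y j \<and> y j < 1 - x"
  shows "card {B \<in> Pow T. 2 - x \<le> (\<Sum>j\<in>T. flip B y j)} \<le> 2"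
proof (rule card_le2_of_sd)
  have fT: "finite T" using cT by (metis card.infinite zero_neq_numeral)
  show "finite {B \<in> Pow T. 2 - x \<le> (\<Sum>j\<in>T. flip B y j)}" using fT by simp
  show "\<And>B. B \<in> {B \<in> Pow T. 2 - x \<le> (\<Sum>j\<in>T. flip B y j)} \<Longrightarrow> finite B"
    using fT finite_subset by auto
  fix B B' assume B: "B \<in> {B \<in> Pow T. 2 - x \<le> (\<Sum>j\<in>T. flip B y j)}" and B': "B' \<in> {B \<in> Pow T. 2 - x \<le> (\<Sum>j\<in>T. flip B y j)}"
  let ?D = "(B - B') \<union> (B' - B)"
  have DT: "?D \<subseteq> T" using B B' by auto
  have sum2: "4 - 2 * x \<le> (\<Sum>j\<in>T. flip B y j + flip B' y j)" using B B' by (simp add: sum.distrib)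
  have eqs: "(\<Sum>j\<in>T. flip B y j + flip B' y j) = (\<Sum>j\<in>?D. flip B y j + flip B' y j) + (\<Sum>j\<in>T - ?D. flip B y j + flip B' y j)"
    using fT DT by (metis (no_types, lifting) sum.subset_diff add.commute)
  have s1: "(\<Sum>j\<in>?D. flip B y j + flip B' y j) = real (card ?D)"
  proof -
    have "(\<Sum>j\<in>?D. flip B y j + flip B' y j) = (\<Sum>j\<in>?D. 1)"
      by (intro sum.cong refl) (auto simp: flip_def)
    thus ?thesis by simp
  qed
  have s2: "(\<Sum>j\<in>T - ?D. flip B y j + flip B' y j) \<le> (\<Sum>j\<in>T - ?D. 2 - 2 * x)"
  proof (intro sum_mono)
    fix j assume j: "j \<in> T - ?D"
    then have "flip B y j = flip B' y j" by (auto simp: flip_def)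
    moreover have "flip B y j < 1 - x" using yin[of j] j by (auto simp: flip_def)
    ultimately show "flip B y j + flip B' y j \<le> 2 - 2 * x" by linarith
  qed
  have s2': "(\<Sum>j\<in>T - ?D. flip B y j + flip B' y j) < (\<Sum>j\<in>T - ?D. 2 - 2 * x) \<or> T - ?D = {}"
  proof (cases "T - ?D = {}")
    case False
    have "(\<Sum>j\<in>T - ?D. flip B y j + flip B' y j) < (\<Sum>j\<in>T - ?D. 2 - 2 * x)"
    proof (rule sum_strict_mono)
      fix j assume j: "j \<in> T - ?D"
      then have "flip B y j = flip B' y j" by (auto simp: flip_def)
      moreover have "flip B y j < 1 - x" using yin[of j] j by (auto simp: flip_def)
      ultimately show "flip B y j + flip B' y j < 2 - 2 * x" by linarith
    qed (use fT False in auto)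
    thus ?thesis by simp
  qed simp
  have cD: "card (T - ?D) = 3 - card ?D" using card_Diff_subset[OF finite_subset[OF DT fT] DT] cT by simp
  have cDle: "card ?D \<le> 3" using DT fT cT card_mono by metis
  show "card ?D \<le> 1"
  proof (rule ccontr)
    assume "\<not> card ?D \<le> 1"
    then have "card ?D = 2 \<or> card ?D = 3" using cDle by linarith
    then show False
    proof
      assume c2: "card ?D = 2"
      then have "card (T - ?D) = 1" using cD by simp
      then have "T - ?D \<noteq> {}" by (metis card.empty zero_neq_one)
      then have "(\<Sum>j\<in>T - ?D. flip B y j + flip B' y j) < 2 - 2 * x" using s2' \<open>card (T - ?D) = 1\<close> by simp
      then show False using sum2 eqs s1 c2 by simp
    next
      assume c3: "card ?D = 3"
      then have "card (T - ?D) = 0" using cD by simp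
      then have "T - ?D = {}" using fT by simp
      then have z: "(\<Sum>j\<in>T - ?D. flip B y j + flip B' y j) = 0" by (simp only: sum.empty)
      have r3: "real (card ?D) = 3" using c3 by simp
      show False using sum2 eqs s1 z r3 x2 by linarith
    qed
  qed
qed

lemma cc_gt: "x < cc" and cc_lt: "cc < 1/2"
  using x1 x2 by (auto simp: cc_def)

lemma flip_count0:
  fixes T :: "nat set" and y :: "nat \<Rightarrow> real"
  assumes cT: "card T = 3" and yin: "\<And>j. j \<in> T \<Longrightarrow> cc < y j \<and> y j < 1 - cc"
  shows "{B \<in> Pow T. 2 - x \<le> (\<Sum>j\<in>T. flip B y j)} = {}"
proof -
  have fT: "finite T" using cT by (metis card.infinite zero_neq_numeral)
  { fix B assume "B \<subseteq> T"
    have "(\<Sum>j\<in>T. flip B y j) < (\<Sum>j\<in>T. 1 - cc)"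
      by (rule sum_strict_mono) (use fT cT yin in \<open>auto simp: flip_def\<close>)
    also have "\<dots> = 2 - x" using cT by (simp add: cc_def)
    finally have "\<not> 2 - x \<le> (\<Sum>j\<in>T. flip B y j)" by simp }
  thus ?thesis by auto
qed

end

context xloc begin

lemma lC_le_lI: "lC y \<le> lI y"
  using cc_gt by (auto simp: lC_def lI_def indicator_def)

lemma claim2:
  assumes a: "a < 4"
  shows "(\<Sum>B\<in>Pow ({..<4} - {a}). KL a (flip B xs))
     \<le> 2 * lL (xs a) * ((\<Prod>j\<in>{..<4} - {a}. lI (xs j)) - (\<Prod>j\<in>{..<4} - {a}. lC (xs j)))"
proof -
  let ?T = "{..<4::nat} - {a}"
  have cT: "card ?T = 3" using a by simp
  let ?PI = "\<Prod>j\<in>?T. lI (xs j)" and ?PC = "\<Prod>j\<in>?T. lC (xs j)"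
  let ?S = "{B \<in> Pow ?T. 2 - x \<le> (\<Sum>j\<in>?T. flip B xs j)}"
  have K: "KL a (flip B xs) = lL (xs a) * ?PI * (if 2 - x \<le> (\<Sum>j\<in>?T. flip B xs j) then 1 else 0)"
    if "B \<in> Pow ?T" for B
  proof -
    have "flip B xs a = xs a" using that by (auto simp: flip_def)
    moreover have "(\<Prod>j\<in>?T. lI (flip B xs j)) = ?PI"
      by (intro prod.cong refl) (auto simp: flip_def lI_refl)
    ultimately show ?thesis by (simp add: KL_def)
  qed
  have "(\<Sum>B\<in>Pow ?T. KL a (flip B xs)) = (\<Sum>B\<in>Pow ?T. lL (xs a) * ?PI * (if 2 - x \<le> (\<Sum>j\<in>?T. flip B xs j) then 1 else 0))"
    by (intro sum.cong refl K)
  also have "\<dots> = lL (xs a) * ?PI * (\<Sum>B\<in>Pow ?T. (if 2 - x \<le> (\<Sum>j\<in>?T. flip B xs j) then 1 else 0))"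
    by (simp add: sum_distrib_left)
  also have "(\<Sum>B\<in>Pow ?T. (if 2 - x \<le> (\<Sum>j\<in>?T. flip B xs j) then 1 else (0::real))) = (\<Sum>B\<in>?S. 1)"
    by (rule sum.inter_filter[symmetric]) simp
  also have "\<dots> = real (card ?S)" by simp
  finally have L: "(\<Sum>B\<in>Pow ?T. KL a (flip B xs)) = lL (xs a) * ?PI * real (card ?S)" .
  have Ln: "0 \<le> lL (xs a)" by (simp add: ind01)
  show ?thesis
  proof (cases "\<forall>j\<in>?T. x < xs j \<and> xs j < 1 - x")
    case False
    then obtain j0 where j0: "j0 \<in> ?T" "\<not> (x < xs j0 \<and> xs j0 < 1 - x)" by blast
    have PI0: "?PI = 0" by (rule prod_zero) (use j0 in \<open>auto simp: lI_def intro!: bexI[of _ j0]\<close>)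
    have lCn: "\<And>y. 0 \<le> lC y" by (simp add: lC_def)
    have "?PC \<le> ?PI" by (intro prod_mono conjI lCn lC_le_lI)
    moreover have "0 \<le> ?PC" by (intro prod_nonneg) (auto simp: lC_def)
    ultimately have PC0: "?PC = 0" using PI0 by simp
    have r: "2 * lL (xs a) * (?PI - ?PC) = 0" by (simp only: PI0 PC0) simp
    have l: "(\<Sum>B\<in>Pow ?T. KL a (flip B xs)) = 0" by (simp only: L PI0 mult_zero_right mult_zero_left)
    show ?thesis using r l by linarith
  next
    case True
    then have PI1: "?PI = 1" by (intro prod.neutral) (auto simp: lI_def)
    have c2: "card ?S \<le> 2" by (rule flip_count[OF cT]) (use True in auto)
    show ?thesis
    proof (cases "\<forall>j\<in>?T. cc < xs j \<and> xs j < 1 - cc")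
      case True
      then have S0: "?S = {}" by (intro flip_count0[OF cT]) auto
      have PC1: "?PC = 1" using True by (intro prod.neutral) (auto simp: lC_def)
      have l: "(\<Sum>B\<in>Pow ?T. KL a (flip B xs)) = 0" by (simp only: L S0 card.empty of_nat_0 mult_zero_right)
      have r: "2 * lL (xs a) * (?PI - ?PC) = 0" by (simp only: PI1 PC1) simp
      show ?thesis using l r by linarith
    next
      case False
      then obtain j0 where j0: "j0 \<in> ?T" "\<not> (cc < xs j0 \<and> xs j0 < 1 - cc)" by blast
      have PC0: "?PC = 0" by (rule prod_zero) (use j0 in \<open>auto simp: lC_def intro!: bexI[of _ j0]\<close>)
      have m: "lL (xs a) * real (card ?S) \<le> lL (xs a) * 2"
        using c2 Ln by (intro mult_left_mono) auto
      have l: "(\<Sum>B\<in>Pow ?T. KL a (flip B xs)) = lL (xs a) * real (card ?S)" by (simp only: L PI1 mult_1_right)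
      have r: "2 * lL (xs a) * (?PI - ?PC) = lL (xs a) * 2" by (simp only: PI1 PC0) simp
      show ?thesis using l r m by linarith
    qed
  qed
qed

end

lemma share_measurable:
  assumes j: "j < k" and meas: "\<And>l. l < k \<Longrightarrow> (\<lambda>xs. xs l) \<in> borel_measurable N"
  shows "(\<lambda>xs. vote_share k xs j) \<in> borel_measurable N"
proof -
  define Q where "Q = {p \<in> space (N \<Otimes>\<^sub>M lborel). snd p \<in> {0..1} \<and> (\<forall>l\<in>{..<k}. l \<noteq> j \<longrightarrow> \<bar>snd p - fst p j\<bar> < \<bar>snd p - fst p l\<bar>)}"
  have m2: "\<And>l. l < k \<Longrightarrow> (\<lambda>p. fst p l) \<in> borel_measurable (N \<Otimes>\<^sub>M lborel)"
    using meas by (intro measurable_compose[OF measurable_fst]) auto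
  have "Q \<in> sets (N \<Otimes>\<^sub>M lborel)"
    unfolding Q_def using m2 j by measurable
  then have "(\<lambda>xs. emeasure lborel (Pair xs -` Q)) \<in> borel_measurable N"
    by (rule lborel.measurable_emeasure_Pair)
  then have "(\<lambda>xs. enn2real (emeasure lborel (Pair xs -` Q))) \<in> borel_measurable N" by measurable
  moreover have "\<And>xs. xs \<in> space N \<Longrightarrow> Pair xs -` Q = cell k xs j"
    by (auto simp: Q_def cell_def space_pair_measure)
  ultimately show ?thesis
    by (subst measurable_cong[where g="\<lambda>xs. enn2real (emeasure lborel (Pair xs -` Q))"])
       (auto simp: vote_share_cell measure_def)
qed

lemma win_prob_alt:
  "win_prob k xs i = (if (\<forall>j\<in>{..<k}. vote_share k xs j \<le> vote_share k xs i) \<and> i < k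
     then 1 / (\<Sum>j<k. if (\<forall>l\<in>{..<k}. vote_share k xs l \<le> vote_share k xs j) then 1 else 0) else 0)"
proof -
  have "real (card (plurality_set k xs)) = (\<Sum>j<k. if (\<forall>l\<in>{..<k}. vote_share k xs l \<le> vote_share k xs j) then 1 else (0::real))"
  proof -
    have "plurality_set k xs = {..<k} \<inter> {j. \<forall>l\<in>{..<k}. vote_share k xs l \<le> vote_share k xs j}"
      by (auto simp: plurality_set_def)
    then show ?thesis by (simp add: sum.If_cases)
  qed
  then show ?thesis by (auto simp: win_prob_def plurality_set_def)
qed

lemma win_measurable:
  assumes i: "i < k" and meas: "\<And>l. l < k \<Longrightarrow> (\<lambda>xs. xs l) \<in> borel_measurable N"
  shows "(\<lambda>xs. win_prob k xs i) \<in> borel_measurable N"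
proof -
  have sm: "\<And>j. j < k \<Longrightarrow> (\<lambda>xs. vote_share k xs j) \<in> borel_measurable N"
    using share_measurable meas by auto
  have pw: "Measurable.pred N (\<lambda>xs. \<forall>l\<in>{..<k}. vote_share k xs l \<le> vote_share k xs j)" if j: "j < k" for j
  proof (intro pred_intros_finite(3))
    fix l assume "l \<in> {..<k}"
    then have [measurable]: "(\<lambda>xs. vote_share k xs l) \<in> borel_measurable N" using sm by auto
    have [measurable]: "(\<lambda>xs. vote_share k xs j) \<in> borel_measurable N" using sm j by auto
    show "Measurable.pred N (\<lambda>xs. vote_share k xs l \<le> vote_share k xs j)"
      unfolding pred_def by (rule borel_measurable_le) (use sm j \<open>l \<in> {..<k}\<close> in auto)
  qed simp
  have s: "(\<lambda>xs. (\<Sum>j<k. if (\<forall>l\<in>{..<k}. vote_share k xs l \<le> vote_share k xs j) then 1 else (0::real))) \<in> borel_measurable N"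
    by (intro borel_measurable_sum measurable_If) (use pw in \<open>auto simp: pred_def\<close>)
  have pi: "Measurable.pred N (\<lambda>xs. (\<forall>j\<in>{..<k}. vote_share k xs j \<le> vote_share k xs i) \<and> i < k)"
    using pw[OF i] i by simp
  have "(\<lambda>xs. (if (\<forall>j\<in>{..<k}. vote_share k xs j \<le> vote_share k xs i) \<and> i < k
     then 1 / (\<Sum>j<k. if (\<forall>l\<in>{..<k}. vote_share k xs l \<le> vote_share k xs j) then 1 else 0) else (0::real))) \<in> borel_measurable N"
    by (intro measurable_If borel_measurable_divide s) (use pi in \<open>auto simp: pred_def\<close>)
  then show ?thesis unfolding win_prob_alt .
qed


lemma coord_meas:
  assumes sM: "sets M = sets borel" and i: "i < k"
  shows "(\<lambda>xs. xs i) \<in> borel_measurable (PiM {..<k} (\<lambda>_. M))"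
proof -
  have "(\<lambda>xs. xs i) \<in> measurable (PiM {..<k} (\<lambda>_. M)) M"
    using i by (intro measurable_component_singleton) auto
  thus ?thesis using measurable_cong_sets[OF refl sM] by blast
qed

lemma win_meas_P:
  assumes sM: "sets M = sets borel" and i: "i < k"
  shows "(\<lambda>xs. win_prob k xs i) \<in> borel_measurable (PiM {..<k} (\<lambda>_. M))"
  by (rule win_measurable[OF i coord_meas[OF sM]])

lemma step_mu_alt:
  assumes sM: "sets M = sets borel" and A: "A \<in> sets borel"
  shows "(\<integral>\<^sup>+ xs. ennreal (\<Sum>i<k. win_prob k xs i * indicator A (xs i)) \<partial>PiM {..<k} (\<lambda>_. M))
       = (\<Sum>i<k. \<integral>\<^sup>+ xs. ennreal (win_prob k xs i) * indicator A (xs i) \<partial>PiM {..<k} (\<lambda>_. M))"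
proof -
  have "(\<integral>\<^sup>+ xs. ennreal (\<Sum>i<k. win_prob k xs i * indicator A (xs i)) \<partial>PiM {..<k} (\<lambda>_. M))
      = (\<integral>\<^sup>+ xs. (\<Sum>i<k. ennreal (win_prob k xs i) * indicator A (xs i)) \<partial>PiM {..<k} (\<lambda>_. M))"
  proof (intro nn_integral_cong)
    fix xs
    have "ennreal (\<Sum>i<k. win_prob k xs i * indicator A (xs i)) = (\<Sum>i<k. ennreal (win_prob k xs i * indicator A (xs i)))"
      by (rule sum_ennreal[symmetric]) (simp add: win_nonneg)
    also have "\<dots> = (\<Sum>i<k. ennreal (win_prob k xs i) * indicator A (xs i))"
      by (intro sum.cong refl) (simp add: ennreal_mult' win_nonneg ennreal_indicator)
    finally show "ennreal (\<Sum>i<k. win_prob k xs i * indicator A (xs i)) = (\<Sum>i<k. ennreal (win_prob k xs i) * indicator A (xs i))" .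
  qed
  also have "\<dots> = (\<Sum>i<k. \<integral>\<^sup>+ xs. ennreal (win_prob k xs i) * indicator A (xs i) \<partial>PiM {..<k} (\<lambda>_. M))"
  proof (rule nn_integral_sum)
    fix i assume i: "i \<in> {..<k}"
    have [measurable]: "(\<lambda>xs. win_prob k xs i) \<in> borel_measurable (PiM {..<k} (\<lambda>_. M))"
      using win_meas_P[OF sM] i by auto
    have [measurable]: "(\<lambda>xs. xs i) \<in> borel_measurable (PiM {..<k} (\<lambda>_. M))"
      using coord_meas[OF sM] i by auto
    show "(\<lambda>xs. ennreal (win_prob k xs i) * indicator A (xs i)) \<in> borel_measurable (PiM {..<k} (\<lambda>_. M))"
      using A by measurable
  qed
  finally show ?thesis .
qed

lemma step_emeasure:
  assumes sM: "sets M = sets borel" and A: "A \<in> sets borel"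
  shows "emeasure (plurality_step k M) A =
     (\<integral>\<^sup>+ xs. ennreal (\<Sum>i<k. win_prob k xs i * indicator A (xs i)) \<partial>PiM {..<k} (\<lambda>_. M))"
  unfolding plurality_step_def
proof (rule emeasure_measure_of_sigma)
  show "sigma_algebra UNIV (sets borel)" using sets.sigma_algebra_axioms[of borel] by simp
  show "positive (sets borel) (\<lambda>A. \<integral>\<^sup>+ xs. ennreal (\<Sum>i<k. win_prob k xs i * indicator A (xs i)) \<partial>PiM {..<k} (\<lambda>_. M))"
    by (simp add: positive_def)
  show "countably_additive (sets borel) (\<lambda>A. \<integral>\<^sup>+ xs. ennreal (\<Sum>i<k. win_prob k xs i * indicator A (xs i)) \<partial>PiM {..<k} (\<lambda>_. M))"
    unfolding countably_additive_def
  proof (intro allI impI)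
    fix F :: "nat \<Rightarrow> real set"
    assume F: "range F \<subseteq> sets borel" "disjoint_family F" "\<Union> (range F) \<in> sets borel"
    let ?P = "PiM {..<k} (\<lambda>_. M)"
    have "(\<Sum>n. \<integral>\<^sup>+ xs. ennreal (\<Sum>i<k. win_prob k xs i * indicator (F n) (xs i)) \<partial>?P)
        = (\<Sum>n. \<Sum>i<k. \<integral>\<^sup>+ xs. ennreal (win_prob k xs i) * indicator (F n) (xs i) \<partial>?P)"
      using F by (subst step_mu_alt[OF sM]) auto
    also have "\<dots> = (\<Sum>i<k. \<Sum>n. \<integral>\<^sup>+ xs. ennreal (win_prob k xs i) * indicator (F n) (xs i) \<partial>?P)"
      by (rule suminf_sum[OF summableI])
    also have "\<dots> = (\<Sum>i<k. \<integral>\<^sup>+ xs. (\<Sum>n. ennreal (win_prob k xs i) * indicator (F n) (xs i)) \<partial>?P)"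
    proof (intro sum.cong refl nn_integral_suminf[symmetric])
      fix i n assume i: "i \<in> {..<k}"
      have [measurable]: "(\<lambda>xs. win_prob k xs i) \<in> borel_measurable ?P"
        using win_meas_P[OF sM] i by auto
      have [measurable]: "(\<lambda>xs. xs i) \<in> borel_measurable ?P"
        using coord_meas[OF sM] i by auto
      have [measurable]: "F n \<in> sets borel" using F by auto
      show "(\<lambda>xs. ennreal (win_prob k xs i) * indicator (F n) (xs i)) \<in> borel_measurable ?P"
        by measurable
    qed
    also have "\<dots> = (\<Sum>i<k. \<integral>\<^sup>+ xs. ennreal (win_prob k xs i) * indicator (\<Union> (range F)) (xs i) \<partial>?P)"
      by (intro sum.cong refl nn_integral_cong) (simp add: suminf_indicator[OF F(2)])
    also have "\<dots> = \<integral>\<^sup>+ xs. ennreal (\<Sum>i<k. win_prob k xs i * indicator (\<Union> (range F)) (xs i)) \<partial>?P"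
      using F by (subst step_mu_alt[OF sM]) auto
    finally show "(\<Sum>n. \<integral>\<^sup>+ xs. ennreal (\<Sum>i<k. win_prob k xs i * indicator (F n) (xs i)) \<partial>?P)
        = \<integral>\<^sup>+ xs. ennreal (\<Sum>i<k. win_prob k xs i * indicator (\<Union> (range F)) (xs i)) \<partial>?P" .
  qed
qed (rule A)

lemma step_sets: "sets (plurality_step k M) = sets borel"
proof -
  have "sigma_sets UNIV (sets borel) = sets (borel::real measure)" using sets.sigma_sets_eq[of borel] by simp
  then show ?thesis unfolding plurality_step_def by (simp add: sets_measure_of_conv)
qed


lemma share_cong: assumes "\<And>j. j < k \<Longrightarrow> xs j = ys j" "i < k"
  shows "vote_share k xs i = vote_share k ys i"
proof -
  have "cell k xs i = cell k ys i" using assms by (auto simp: cell_def)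
  thus ?thesis by (simp add: vote_share_cell)
qed

lemma win_cong: assumes "\<And>j. j < k \<Longrightarrow> xs j = ys j"
  shows "win_prob k xs i = win_prob k ys i"
proof -
  have "plurality_set k xs = plurality_set k ys"
    using share_cong[OF assms] by (auto simp: plurality_set_def)
  thus ?thesis by (simp add: win_prob_def)
qed

locale msym = fixes M :: "real measure" assumes MF: "M \<in> calF"
begin

lemma probM: "prob_space M" and sM[measurable_cong]: "sets M = sets borel" and M01: "measure M {0..1} = 1"
  and Msym: "distr M borel (\<lambda>y. 1 - y) = M" and Matom: "\<And>y. measure M {y} = 0"
  using MF by (auto simp: calF_def)

interpretation prob_space M by (rule probM)

lemma spM: "space M = UNIV" using sets_eq_imp_space_eq[OF sM] by simp

lemma Msym_em: assumes "A \<in> sets borel" shows "emeasure M ((\<lambda>y. 1 - y) -` A) = emeasure M A"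
proof -
  have "emeasure M A = emeasure (distr M borel (\<lambda>y. 1 - y)) A" using Msym by simp
  also have "\<dots> = emeasure M ((\<lambda>y. 1 - y) -` A)"
    by (subst emeasure_distr) (auto simp: assms spM measurable_cong_sets[OF sM refl])
  finally show ?thesis by simp
qed

lemma Msym_m: assumes "A \<in> sets borel" shows "measure M ((\<lambda>y. 1 - y) -` A) = measure M A"
  using Msym_em[OF assms] by (simp add: measure_def)

abbreviation P :: "(nat \<Rightarrow> real) measure" where "P \<equiv> PiM {..<4::nat} (\<lambda>_. M)"

interpretation PS: product_sigma_finite "\<lambda>_::nat. M"
  by standard

interpretation PP: prob_space P by (rule prob_space_PiM) (simp add: probM)

lemma coordP[measurable]: "i \<in> {..<4} \<Longrightarrow> (\<lambda>xs. xs i) \<in> borel_measurable P"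
  using coord_meas[OF sM, of i 4] by simp

lemma spaceP: "space P = PiE {..<4} (\<lambda>_. UNIV)" by (simp add: space_PiM spM)

lemma flip_space: assumes "B \<subseteq> {..<4}" "xs \<in> space P" shows "flip B xs \<in> space P"
  using assms by (auto simp: spaceP flip_def PiE_def extensional_def)

lemma flip_meas: assumes B: "B \<subseteq> {..<4}" shows "flip B \<in> measurable P P"
proof -
  have "(\<lambda>xs. \<lambda>i\<in>{..<4}. if i \<in> B then 1 - xs i else xs i) \<in> measurable P P"
    by (intro measurable_restrict) (auto simp: measurable_cong_sets[OF refl sM])
  moreover have "\<And>xs. xs \<in> space P \<Longrightarrow> (\<lambda>i\<in>{..<4}. if i \<in> B then 1 - xs i else xs i) = flip B xs"
    using B by (auto simp: spaceP flip_def PiE_def extensional_def fun_eq_iff)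
  ultimately show ?thesis using measurable_cong by (metis (no_types, lifting))
qed

lemma flip_distr: assumes B: "B \<subseteq> {..<4}" shows "distr P P (flip B) = P"
proof (rule PS.PiM_eqI)
  show "finite {..<4::nat}" by simp
  show "sets (distr P P (flip B)) = sets P" by simp
  fix A assume A: "\<And>i. i \<in> {..<4::nat} \<Longrightarrow> A i \<in> sets M"
  define A' where "A' i = (if i \<in> B then (\<lambda>y. 1 - y) -` A i else A i)" for i
  have rb: "\<And>C. C \<in> sets borel \<Longrightarrow> (\<lambda>y::real. 1 - y) -` C \<in> sets borel"
    using measurable_sets[of "\<lambda>y::real. 1 - y" borel borel] by simp
  have A': "\<And>i. i \<in> {..<4} \<Longrightarrow> A' i \<in> sets M"
    using A rb by (auto simp: A'_def sM)
  have "flip B -` Pi\<^sub>E {..<4} A \<inter> space P = Pi\<^sub>E {..<4} A'"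
    using B by (auto simp: spaceP flip_def PiE_def A'_def extensional_def Pi_def split: if_splits)
  then have "emeasure (distr P P (flip B)) (Pi\<^sub>E {..<4} A) = emeasure P (Pi\<^sub>E {..<4} A')"
    using A by (subst emeasure_distr) (auto intro: flip_meas[OF B])
  also have "\<dots> = (\<Prod>i<4. emeasure M (A' i))"
    using A' by (subst PS.emeasure_PiM) auto
  also have "\<dots> = (\<Prod>i<4. emeasure M (A i))"
    by (intro prod.cong refl) (use A in \<open>auto simp: A'_def Msym_em sM\<close>)
  finally show "emeasure (distr P P (flip B)) (Pi\<^sub>E {..<4} A) = (\<Prod>i<4. emeasure M (A i))" .
qed

lemma integral_flip:
  fixes f :: "(nat \<Rightarrow> real) \<Rightarrow> real"
  assumes B: "B \<subseteq> {..<4}" and f: "f \<in> borel_measurable P"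
  shows "(\<integral>xs. f (flip B xs) \<partial>P) = (\<integral>xs. f xs \<partial>P)"
proof -
  have "(\<integral>xs. f xs \<partial>P) = (\<integral>xs. f xs \<partial>distr P P (flip B))" using flip_distr[OF B] by simp
  also have "\<dots> = (\<integral>xs. f (flip B xs) \<partial>P)" by (rule integral_distr[OF flip_meas[OF B] f])
  finally show ?thesis by simp
qed

lemma integral_prod4:
  fixes g :: "nat \<Rightarrow> real \<Rightarrow> real"
  assumes g: "\<And>i. i < 4 \<Longrightarrow> g i \<in> borel_measurable borel" and bnd: "\<And>i y. i < 4 \<Longrightarrow> \<bar>g i y\<bar> \<le> 1"
  shows "(\<integral>xs. (\<Prod>i<4. g i (xs i)) \<partial>P) = (\<Prod>i<4. \<integral>y. g i y \<partial>M)"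
proof (rule PS.product_integral_prod)
  fix i :: nat assume "i \<in> {..<4}"
  then have [measurable]: "g i \<in> borel_measurable M" using g by (simp add: measurable_cong_sets[OF sM refl])
  show "integrable M (g i)"
    by (rule integrable_const_bound[where B=1]) (use bnd \<open>i \<in> {..<4}\<close> in auto)
qed simp

lemma integral_coord:
  fixes g :: "real \<Rightarrow> real"
  assumes i: "i < 4" and g: "g \<in> borel_measurable borel"
  shows "(\<integral>xs. g (xs i) \<partial>P) = (\<integral>y. g y \<partial>M)"
proof -
  have "distr P M (\<lambda>xs. xs i) = M" using i by (intro distr_PiM_component) (auto simp: probM)
  then have "(\<integral>y. g y \<partial>M) = (\<integral>y. g y \<partial>distr P M (\<lambda>xs. xs i))" by simp
  also have "\<dots> = (\<integral>xs. g (xs i) \<partial>P)"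
    by (rule integral_distr) (use i g in \<open>auto simp: measurable_cong_sets[OF sM refl]\<close>)
  finally show ?thesis by simp
qed

end

context msym begin

interpretation prob_space M by (rule probM)
interpretation PS: product_sigma_finite "\<lambda>_::nat. M"
  by standard
interpretation PP: prob_space P by (rule prob_space_PiM) (simp add: probM)

lemma Matom_em: "emeasure M {y} = 0"
  using Matom[of y] by (simp add: emeasure_eq_measure)

lemma AE_range: assumes i: "i < 4" shows "AE xs in P. 0 \<le> xs i \<and> xs i \<le> 1"
proof -
  have "AE y in M. y \<in> {0..1}" by (rule AE_prob_1) (simp add: M01)
  then have "AE y in distr P M (\<lambda>xs. xs i). y \<in> {0..1}"
    using i by (subst distr_PiM_component) (auto simp: probM)
  then have "AE xs in P. xs i \<in> {0..1}"
    by (rule AE_distrD[rotated]) (use i in auto)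
  thus ?thesis by simp
qed

lemma AE_pair: assumes i: "i < 4" and j: "j < 4" and ij: "i \<noteq> j"
  shows "AE xs in P. xs i \<noteq> xs j \<and> xs i \<noteq> 1 - xs j"
proof -
  define S where "S = {xs \<in> space P. xs i = xs j \<or> xs i = 1 - xs j}"
  have [measurable]: "(\<lambda>xs. xs i) \<in> borel_measurable P" "(\<lambda>xs. xs j) \<in> borel_measurable P"
    using i j by auto
  have mj': "(\<lambda>xs. 1 - xs j) \<in> borel_measurable P" using i j by auto
  have S_eq: "S = {xs \<in> space P. xs i = xs j} \<union> {xs \<in> space P. xs i = 1 - xs j}" by (auto simp: S_def)
  have Ssets[measurable]: "S \<in> sets P" unfolding S_eq
    by (intro sets.Un borel_measurable_eq) (use i j mj' in auto)
  let ?I = "{..<4::nat} - {i}"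
  have ins: "insert i ?I = {..<4}" using i by auto
  have "emeasure P S = (\<integral>\<^sup>+ xs. indicator S xs \<partial>P)" by (simp add: Ssets)
  also have "\<dots> = (\<integral>\<^sup>+ x. (\<integral>\<^sup>+ y. indicator S (x(i := y)) \<partial>M) \<partial>PiM ?I (\<lambda>_. M))"
    using PS.product_nn_integral_insert[of ?I i "indicator S"] ins by simp
  also have "\<dots> = (\<integral>\<^sup>+ x. 0 \<partial>PiM ?I (\<lambda>_. M))"
  proof (intro nn_integral_cong)
    fix x assume x: "x \<in> space (PiM ?I (\<lambda>_. M))"
    have "(\<integral>\<^sup>+ y. indicator S (x(i := y)) \<partial>M) = (\<integral>\<^sup>+ y. indicator {x j, 1 - x j} y \<partial>M)"
    proof (intro nn_integral_cong)
      fix y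
      have "x(i := y) \<in> space P" using x i by (auto simp: spaceP space_PiM PiE_def extensional_def spM)
      then show "indicator S (x(i := y)) = (indicator {x j, 1 - x j} y :: ennreal)"
        using ij by (auto simp: S_def indicator_def)
    qed
    also have "\<dots> = emeasure M {x j, 1 - x j}" by (simp add: sM)
    also have "\<dots> = emeasure M ({x j} \<union> {1 - x j})" by (simp only: insert_is_Un[of "x j" "{1 - x j}"])
    also have "\<dots> \<le> emeasure M {x j} + emeasure M {1 - x j}"
      by (rule emeasure_subadditive) (simp_all add: sM)
    also have "\<dots> = 0" by (simp add: Matom_em)
    finally show "(\<integral>\<^sup>+ y. indicator S (x(i := y)) \<partial>M) = 0" by simp
  qed
  finally have "emeasure P S = 0" by simp
  then have "S \<in> null_sets P" using Ssets by auto
  then show ?thesis by (rule AE_I') (auto simp: S_def)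
qed

end

locale stepx = msym + xloc
begin

lemma AE_Good: "AE xs in P. Good xs"
proof -
  have a1: "AE xs in P. \<forall>i\<in>{..<4}. 0 \<le> xs i \<and> xs i \<le> 1"
    by (intro eventually_ball_finite ballI AE_range) auto
  have a2: "AE xs in P. \<forall>i\<in>{..<4}. \<forall>j\<in>{..<4}. i \<noteq> j \<longrightarrow> xs i \<noteq> xs j \<and> xs i \<noteq> 1 - xs j"
  proof (intro eventually_ball_finite ballI)
    fix i j :: nat assume "i \<in> {..<4}" "j \<in> {..<4}"
    then show "AE xs in P. i \<noteq> j \<longrightarrow> xs i \<noteq> xs j \<and> xs i \<noteq> 1 - xs j"
      using AE_pair[of i j] by (cases "i = j") auto
  qed simp_all
  show ?thesis using a1 a2 by eventually_elim (auto simp: Good_def)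
qed

end

context stepx begin

interpretation prob_space M by (rule probM)
interpretation PS: product_sigma_finite "\<lambda>_::nat. M"
  by standard
interpretation PP: prob_space P by (rule prob_space_PiM) (simp add: probM)

definition ff :: real where "ff = measure M {..x}"
definition Fc :: real where "Fc = measure M {..cc}"

lemma meas_refl_le: "measure M {t..} = measure M {..1 - t}"
proof -
  have "(\<lambda>y. 1 - y) -` {..1 - t} = {t..}" by auto
  thus ?thesis using Msym_m[of "{..1 - t}"] by simp
qed

lemma int_lL: "(\<integral>y. lL y \<partial>M) = ff"
  by (simp add: lL_def ff_def sM)
lemma int_lR: "(\<integral>y. lR y \<partial>M) = ff"
  using meas_refl_le[of "1 - x"] by (simp add: lR_def ff_def sM)

lemma three_parts: assumes "a < b" shows "measure M {a<..<b} = 1 - measure M {..a} - measure M {b..}"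
proof -
  have U: "{..a} \<union> {a<..<b} \<union> {b..} = UNIV" using assms by auto
  have one: "measure M ({..a} \<union> {a<..<b} \<union> {b..}) = 1" unfolding U using prob_space spM by simp
  have "measure M ({..a} \<union> {a<..<b} \<union> {b..}) = measure M ({..a} \<union> {a<..<b}) + measure M {b..}"
    using assms by (intro finite_measure_Union) (auto simp: sM)
  also have "measure M ({..a} \<union> {a<..<b}) = measure M {..a} + measure M {a<..<b}"
    by (intro finite_measure_Union) (auto simp: sM)
  finally show ?thesis using one by simp
qed

lemma int_lI: "(\<integral>y. lI y \<partial>M) = 1 - 2 * ff"
proof -
  have "(\<integral>y. lI y \<partial>M) = measure M {x<..<1-x}" by (simp add: lI_def sM)
  also have "\<dots> = 1 - ff - ff" using three_parts[of x "1-x"] x2 meas_refl_le[of "1-x"] by (simp add: ff_def)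
  finally show ?thesis by simp
qed

lemma int_lC: "(\<integral>y. lC y \<partial>M) = 1 - 2 * Fc"
proof -
  have "(\<integral>y. lC y \<partial>M) = measure M {cc<..<1-cc}" by (simp add: lC_def sM)
  also have "\<dots> = 1 - Fc - Fc" using three_parts[of cc "1-cc"] cc_lt meas_refl_le[of "1-cc"] by (simp add: Fc_def)
  finally show ?thesis by simp
qed

lemma Fc_le: "Fc \<le> 1/2" and Fc_ge: "0 \<le> Fc"
proof -
  have "(\<integral>y. lC y \<partial>M) = measure M {cc<..<1-cc}" by (simp add: lC_def sM)
  thus "Fc \<le> 1/2" using int_lC measure_nonneg[of M "{cc<..<1-cc}"] by linarith
qed (simp add: Fc_def)

lemma ff_ge: "0 \<le> ff" by (simp add: ff_def)

end

context stepx begin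

interpretation prob_space M by (rule probM)
interpretation PS: product_sigma_finite "\<lambda>_::nat. M"
  by standard
interpretation PP: prob_space P by (rule prob_space_PiM) (simp add: probM)

lemma ind_meas[measurable]: "lL \<in> borel_measurable borel" "lR \<in> borel_measurable borel"
  "lI \<in> borel_measurable borel" "lC \<in> borel_measurable borel"
  unfolding lL_def lR_def lI_def lC_def by measurable

lemma KL_meas[measurable]: assumes "a < 4" shows "KL a \<in> borel_measurable P"
proof -
  have [measurable]: "\<And>j. j \<in> {..<4} - {a} \<Longrightarrow> (\<lambda>xs. xs j) \<in> borel_measurable P" by auto
  have [measurable]: "(\<lambda>xs. xs a) \<in> borel_measurable P" using assms by auto
  show ?thesis unfolding KL_def by measurable
qed

lemma KR_meas[measurable]: assumes "a < 4" shows "KR a \<in> borel_measurable P"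
proof -
  have [measurable]: "\<And>j. j \<in> {..<4} - {a} \<Longrightarrow> (\<lambda>xs. xs j) \<in> borel_measurable P" by auto
  have [measurable]: "(\<lambda>xs. xs a) \<in> borel_measurable P" using assms by auto
  show ?thesis unfolding KR_def by measurable
qed

lemma win_measP[measurable]: "i \<in> {..<4} \<Longrightarrow> (\<lambda>xs. win_prob 4 xs i) \<in> borel_measurable P"
  using win_meas_P[OF sM, of i 4] by simp

lemma U_meas[measurable]: "U \<in> borel_measurable P"
  unfolding U_def by measurable

lemma KL_le1: "KL a xs \<le> 1"
  unfolding KL_def using ind01
  by (intro mult_le_one prod_le_1 prod_nonneg mult_nonneg_nonneg) auto

lemma KL_flip_all: assumes "a < 4" shows "KL a (flip {..<4} xs) = KR a xs"
proof -
  have "KL a (flip {..<4} xs) = KL a (\<lambda>j. 1 - xs j)"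
    unfolding KL_def flip_def using assms
    by (intro arg_cong2[where f="(*)"] arg_cong[where f="\<lambda>s. if 2 - x \<le> s then 1 else 0"] sum.cong prod.cong refl) auto
  thus ?thesis using KL_refl[OF assms] by simp
qed

lemma int_KR: assumes "a < 4" shows "(\<integral>xs. KR a xs \<partial>P) = (\<integral>xs. KL a xs \<partial>P)"
proof -
  have "(\<integral>xs. KR a xs \<partial>P) = (\<integral>xs. KL a (flip {..<4} xs) \<partial>P)" using KL_flip_all[OF assms] by simp
  also have "\<dots> = (\<integral>xs. KL a xs \<partial>P)" by (rule integral_flip) (use assms in auto)
  finally show ?thesis .
qed

lemma abs_lL: "\<bar>lL y\<bar> \<le> 1" using ind01[of y] by (simp add: abs_le_iff)

lemma prod_split_a:
  assumes a: "a < 4" and that: "h \<in> borel_measurable borel" "\<And>y. \<bar>h y\<bar> \<le> 1"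
  shows "(\<integral>xs. lL (xs a) * (\<Prod>j\<in>{..<4} - {a}. h (xs j)) \<partial>P) = ff * (\<integral>y. h y \<partial>M) ^ 3"
proof -
  let ?g = "\<lambda>i. if i = a then lL else h"
  have "\<And>xs. lL (xs a) * (\<Prod>j\<in>{..<4} - {a}. h (xs j)) = (\<Prod>i<4. ?g i (xs i))"
  proof -
    fix xs :: "nat \<Rightarrow> real"
    have "(\<Prod>i<4. ?g i (xs i)) = ?g a (xs a) * (\<Prod>i\<in>{..<4} - {a}. ?g i (xs i))"
      using a by (subst prod.remove[of _ a]) auto
    also have "(\<Prod>i\<in>{..<4} - {a}. ?g i (xs i)) = (\<Prod>j\<in>{..<4} - {a}. h (xs j))"
      by (intro prod.cong) auto
    finally show "lL (xs a) * (\<Prod>j\<in>{..<4} - {a}. h (xs j)) = (\<Prod>i<4. ?g i (xs i))" by simp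
  qed
  then have "(\<integral>xs. lL (xs a) * (\<Prod>j\<in>{..<4} - {a}. h (xs j)) \<partial>P) = (\<integral>xs. (\<Prod>i<4. ?g i (xs i)) \<partial>P)" by simp
  also have "\<dots> = (\<Prod>i<4. \<integral>y. ?g i y \<partial>M)"
    by (rule integral_prod4) (use that abs_lL in auto)
  also have "\<dots> = (\<integral>y. ?g a y \<partial>M) * (\<Prod>i\<in>{..<4} - {a}. \<integral>y. ?g i y \<partial>M)"
    using a by (subst prod.remove[of _ a]) auto
  also have "(\<Prod>i\<in>{..<4} - {a}. \<integral>y. ?g i y \<partial>M) = (\<Prod>i\<in>{..<4} - {a}. \<integral>y. h y \<partial>M)"
    by (intro prod.cong) auto
  also have "\<dots> = (\<integral>y. h y \<partial>M) ^ 3" using a by simp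
  finally show ?thesis by (simp add: int_lL)
qed

end

context stepx begin

interpretation prob_space M by (rule probM)
interpretation PS: product_sigma_finite "\<lambda>_::nat. M"
  by standard
interpretation PP: prob_space P by (rule prob_space_PiM) (simp add: probM)

lemma intP: fixes B :: real assumes "f \<in> borel_measurable P" "\<And>xs. \<bar>f xs\<bar> \<le> B" shows "integrable P f"
  by (rule PP.integrable_const_bound[where B=B]) (use assms in auto)

lemma prodL_bnd: "\<bar>lL (xs a) * (\<Prod>j\<in>{..<4} - {a}. h (xs j))\<bar> \<le> 1" if "\<And>y. 0 \<le> h y \<and> h y \<le> 1" for h
proof -
  have "0 \<le> (\<Prod>j\<in>{..<4} - {a}. h (xs j))" "(\<Prod>j\<in>{..<4} - {a}. h (xs j)) \<le> 1"
    using that by (auto intro: prod_nonneg prod_le_1)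
  thus ?thesis using ind01[of "xs a"] by (simp add: abs_le_iff mult_le_one)
qed

lemma int_KL: assumes a: "a < 4"
  shows "(\<integral>xs. KL a xs \<partial>P) \<le> ff * ((1 - 2*ff)^3 - (1 - 2*Fc)^3) / 4"
proof -
  let ?T = "{..<4::nat} - {a}"
  have sub: "\<And>B. B \<in> Pow ?T \<Longrightarrow> B \<subseteq> {..<4}" by auto
  have mKf: "\<And>B. B \<in> Pow ?T \<Longrightarrow> (\<lambda>xs. KL a (flip B xs)) \<in> borel_measurable P"
    using a by (intro measurable_comp[OF flip_meas KL_meas, unfolded comp_def]) auto
  have iKf: "\<And>B. B \<in> Pow ?T \<Longrightarrow> integrable P (\<lambda>xs. KL a (flip B xs))"
    by (rule intP[where B=1]) (auto simp: mKf KL_le1 KL_nonneg abs_le_iff intro: order_trans[OF _ KL_nonneg])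
  have "(\<integral>xs. (\<Sum>B\<in>Pow ?T. KL a (flip B xs)) \<partial>P) = (\<Sum>B\<in>Pow ?T. \<integral>xs. KL a (flip B xs) \<partial>P)"
    by (rule Bochner_Integration.integral_sum[where f="\<lambda>B xs. KL a (flip B xs)"]) (use iKf in auto)
  also have "\<dots> = (\<Sum>B\<in>Pow ?T. \<integral>xs. KL a xs \<partial>P)"
    by (intro sum.cong refl integral_flip sub) (use a in auto)
  also have "\<dots> = 8 * (\<integral>xs. KL a xs \<partial>P)" using a by (simp add: card_Pow)
  finally have e1: "(\<integral>xs. (\<Sum>B\<in>Pow ?T. KL a (flip B xs)) \<partial>P) = 8 * (\<integral>xs. KL a xs \<partial>P)" .
  have [measurable]: "(\<lambda>xs. xs a) \<in> borel_measurable P" using a by auto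
  have [measurable]: "\<And>j. j \<in> {..<4} - {a} \<Longrightarrow> (\<lambda>xs. xs j) \<in> borel_measurable P" by auto
  have mI: "(\<lambda>xs. lL (xs a) * (\<Prod>j\<in>?T. lI (xs j))) \<in> borel_measurable P"
    by measurable
  have mC: "(\<lambda>xs. lL (xs a) * (\<Prod>j\<in>?T. lC (xs j))) \<in> borel_measurable P"
    by measurable
  have iI: "integrable P (\<lambda>xs. lL (xs a) * (\<Prod>j\<in>?T. lI (xs j)))"
    by (rule intP[OF mI prodL_bnd]) (simp add: ind01)
  have iC: "integrable P (\<lambda>xs. lL (xs a) * (\<Prod>j\<in>?T. lC (xs j)))"
    by (rule intP[OF mC prodL_bnd]) (simp add: lC_def)
  have "(\<integral>xs. (\<Sum>B\<in>Pow ?T. KL a (flip B xs)) \<partial>P) \<le>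
        (\<integral>xs. 2 * (lL (xs a) * (\<Prod>j\<in>?T. lI (xs j))) - 2 * (lL (xs a) * (\<Prod>j\<in>?T. lC (xs j))) \<partial>P)"
  proof (rule integral_mono)
    show "integrable P (\<lambda>xs. \<Sum>B\<in>Pow ?T. KL a (flip B xs))"
      by (rule Bochner_Integration.integrable_sum[where f="\<lambda>B xs. KL a (flip B xs)"]) (use iKf in auto)
    show "integrable P (\<lambda>xs. 2 * (lL (xs a) * (\<Prod>j\<in>?T. lI (xs j))) - 2 * (lL (xs a) * (\<Prod>j\<in>?T. lC (xs j))))"
      using iI iC by auto
    fix xs show "(\<Sum>B\<in>Pow ?T. KL a (flip B xs)) \<le> 2 * (lL (xs a) * (\<Prod>j\<in>?T. lI (xs j))) - 2 * (lL (xs a) * (\<Prod>j\<in>?T. lC (xs j)))"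
      using claim2[OF a, of xs] by (simp add: algebra_simps)
  qed
  also have "\<dots> = 2 * (\<integral>xs. lL (xs a) * (\<Prod>j\<in>?T. lI (xs j)) \<partial>P) - 2 * (\<integral>xs. lL (xs a) * (\<Prod>j\<in>?T. lC (xs j)) \<partial>P)"
    using iI iC by simp
  also have "\<dots> = 2 * (ff * (1 - 2*ff)^3) - 2 * (ff * (1 - 2*Fc)^3)"
    by (subst prod_split_a[OF a], simp, simp add: abs_le_iff ind01 lI_def lC_def, subst prod_split_a[OF a], simp,
        simp add: abs_le_iff lC_def, simp add: int_lI int_lC)
  finally show ?thesis using e1 by (simp add: algebra_simps)
qed

end

context stepx begin

interpretation prob_space M by (rule probM)
interpretation PS: product_sigma_finite "\<lambda>_::nat. M"
  by standard
interpretation PP: prob_space P by (rule prob_space_PiM) (simp add: probM)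

lemma int_prod_const:
  fixes g :: "real \<Rightarrow> real"
  assumes g: "g \<in> borel_measurable borel" and b: "\<And>y. \<bar>g y\<bar> \<le> 1"
  shows "(\<integral>xs. (\<Prod>i<4. g (xs i)) \<partial>P) = (\<integral>y. g y \<partial>M) ^ 4"
  using integral_prod4[of "\<lambda>_. g"] g b by simp

lemma lRL: "(1 - lR y) * (1 - lL y) = lI y"
  using x2 by (auto simp: lL_def lR_def lI_def indicator_def)

lemma U_expand: "U xs = 1 - (\<Prod>i<4. 1 - lR (xs i)) - (\<Prod>i<4. 1 - lL (xs i)) + (\<Prod>i<4. lI (xs i))
   + (\<Prod>i<4. lL (xs i)) + (\<Prod>i<4. lR (xs i)) + (\<Sum>a<4. KL a xs + KR a xs)"
proof -
  have "(\<Prod>i<4. 1 - lR (xs i)) * (\<Prod>i<4. 1 - lL (xs i)) = (\<Prod>i<4. lI (xs i))"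
    by (simp add: prod.distrib[symmetric] lRL)
  then show ?thesis unfolding U_def by (simp add: algebra_simps)
qed

lemma bnd1: "\<bar>1 - lR y\<bar> \<le> 1" "\<bar>1 - lL y\<bar> \<le> 1" "\<bar>lI y\<bar> \<le> 1" "\<bar>lL y\<bar> \<le> 1" "\<bar>lR y\<bar> \<le> 1"
  using ind01[of y] by (auto simp: abs_le_iff)

lemma indM: "lL \<in> borel_measurable M" "lR \<in> borel_measurable M"
  using ind_meas measurable_cong_sets[OF sM refl] by blast+

lemma int_1mR: "(\<integral>y. 1 - lR y \<partial>M) = 1 - ff"
proof -
  have "integrable M lR" by (rule integrable_const_bound[where B=1]) (auto simp: bnd1 indM)
  then show ?thesis by (simp add: int_lR prob_space)
qed
lemma int_1mL: "(\<integral>y. 1 - lL y \<partial>M) = 1 - ff"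
proof -
  have "integrable M lL" by (rule integrable_const_bound[where B=1]) (auto simp: bnd1 indM)
  then show ?thesis by (simp add: int_lL prob_space)
qed

lemma prod_meas: fixes g :: "real \<Rightarrow> real" assumes "g \<in> borel_measurable borel"
  shows "(\<lambda>xs. \<Prod>i<4. g (xs i)) \<in> borel_measurable P"
proof (rule borel_measurable_prod)
  fix i :: nat assume "i \<in> {..<4}"
  then have "(\<lambda>xs. xs i) \<in> borel_measurable P" by auto
  then show "(\<lambda>xs. g (xs i)) \<in> borel_measurable P" using assms by (rule measurable_compose)
qed

lemma prod_int: fixes g :: "real \<Rightarrow> real" assumes "g \<in> borel_measurable borel" "\<And>y. \<bar>g y\<bar> \<le> 1"
  shows "integrable P (\<lambda>xs. \<Prod>i<4. g (xs i))"
proof (rule intP[OF prod_meas[OF assms(1)], where B=1])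
  fix xs :: "nat \<Rightarrow> real"
  have "\<bar>\<Prod>i<4. g (xs i)\<bar> = (\<Prod>i<4. \<bar>g (xs i)\<bar>)" by (simp add: abs_prod)
  also have "\<dots> \<le> 1" by (intro prod_le_1) (auto simp: assms)
  finally show "\<bar>\<Prod>i<4. g (xs i)\<bar> \<le> 1" .
qed

lemma KL_int: "a < 4 \<Longrightarrow> integrable P (KL a)"
  by (rule intP[OF KL_meas, where B=1]) (auto simp: abs_le_iff KL_le1 intro: order_trans[OF _ KL_nonneg])

lemma KR_le1: "KR a xs \<le> 1"
  unfolding KR_def using ind01
  by (intro mult_le_one prod_le_1 prod_nonneg mult_nonneg_nonneg) auto

lemma KR_int: "a < 4 \<Longrightarrow> integrable P (KR a)"
  by (rule intP[OF KR_meas, where B=1]) (auto simp: abs_le_iff KR_le1 intro: order_trans[OF _ KR_nonneg])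

lemma int_U: "(\<integral>xs. U xs \<partial>P) \<le> 2 * ff - 2 * ff * (1 - 2 * Fc) ^ 3"
proof -
  have mR: "(\<lambda>y. 1 - lR y) \<in> borel_measurable borel" by measurable
  have mL: "(\<lambda>y. 1 - lL y) \<in> borel_measurable borel" by measurable
  have i1: "integrable P (\<lambda>xs. \<Prod>i<4. 1 - lR (xs i))" by (rule prod_int[OF mR]) (rule bnd1)
  have i2: "integrable P (\<lambda>xs. \<Prod>i<4. 1 - lL (xs i))" by (rule prod_int[OF mL]) (rule bnd1)
  have i3: "integrable P (\<lambda>xs. \<Prod>i<4. lI (xs i))" by (rule prod_int) (auto simp: bnd1)
  have i4: "integrable P (\<lambda>xs. \<Prod>i<4. lL (xs i))" by (rule prod_int) (auto simp: bnd1)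
  have i5: "integrable P (\<lambda>xs. \<Prod>i<4. lR (xs i))" by (rule prod_int) (auto simp: bnd1)
  have i6: "integrable P (\<lambda>xs. \<Sum>a<4. KL a xs + KR a xs)"
    by (rule Bochner_Integration.integrable_sum[where f="\<lambda>a xs. KL a xs + KR a xs"]) (auto intro!: KL_int KR_int)
  have e6: "(\<integral>xs. (\<Sum>a<4. KL a xs + KR a xs) \<partial>P) = (\<Sum>a<4. (\<integral>xs. KL a xs \<partial>P) + (\<integral>xs. KR a xs \<partial>P))"
    by (subst Bochner_Integration.integral_sum[where f="\<lambda>a xs. KL a xs + KR a xs"])
       (auto intro!: sum.cong KL_int KR_int Bochner_Integration.integral_add)
  also have "\<dots> = (\<Sum>a<4. 2 * (\<integral>xs. KL a xs \<partial>P))" by (intro sum.cong refl) (simp add: int_KR)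
  also have "\<dots> \<le> (\<Sum>a<(4::nat). 2 * (ff * ((1 - 2*ff)^3 - (1 - 2*Fc)^3) / 4))"
  proof (intro sum_mono)
    fix a assume "a \<in> {..<4::nat}"
    then have "(\<integral>xs. KL a xs \<partial>P) \<le> ff * ((1 - 2*ff)^3 - (1 - 2*Fc)^3) / 4" using int_KL by auto
    then show "2 * (\<integral>xs. KL a xs \<partial>P) \<le> 2 * (ff * ((1 - 2*ff)^3 - (1 - 2*Fc)^3) / 4)" by linarith
  qed
  also have "\<dots> = 2 * ff * ((1 - 2*ff)^3 - (1 - 2*Fc)^3)" by simp
  finally have e6': "(\<integral>xs. (\<Sum>a<4. KL a xs + KR a xs) \<partial>P) \<le> 2 * ff * ((1 - 2*ff)^3 - (1 - 2*Fc)^3)" .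
  have "(\<integral>xs. U xs \<partial>P) = (\<integral>xs. 1 - (\<Prod>i<4. 1 - lR (xs i)) - (\<Prod>i<4. 1 - lL (xs i)) + (\<Prod>i<4. lI (xs i))
   + (\<Prod>i<4. lL (xs i)) + (\<Prod>i<4. lR (xs i)) + (\<Sum>a<4. KL a xs + KR a xs) \<partial>P)"
    by (simp only: U_expand)
  also have "\<dots> = 1 - (\<integral>xs. (\<Prod>i<4. 1 - lR (xs i)) \<partial>P) - (\<integral>xs. (\<Prod>i<4. 1 - lL (xs i)) \<partial>P)
     + (\<integral>xs. (\<Prod>i<4. lI (xs i)) \<partial>P) + (\<integral>xs. (\<Prod>i<4. lL (xs i)) \<partial>P) + (\<integral>xs. (\<Prod>i<4. lR (xs i)) \<partial>P)
     + (\<integral>xs. (\<Sum>a<4. KL a xs + KR a xs) \<partial>P)"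
    using i1 i2 i3 i4 i5 i6 by (simp add: PP.prob_space)
  also have "\<dots> = 1 - (1 - ff)^4 - (1 - ff)^4 + (1 - 2*ff)^4 + ff^4 + ff^4 + (\<integral>xs. (\<Sum>a<4. KL a xs + KR a xs) \<partial>P)"
    by (simp add: int_prod_const[OF mR bnd1(1)] int_prod_const[OF mL bnd1(2)] int_prod_const bnd1
        int_1mR int_1mL int_lI int_lL int_lR)
  finally have "(\<integral>xs. U xs \<partial>P) \<le> 1 - (1 - ff)^4 - (1 - ff)^4 + (1 - 2*ff)^4 + ff^4 + ff^4 + 2 * ff * ((1 - 2*ff)^3 - (1 - 2*Fc)^3)"
    using e6' by linarith
  also have "\<dots> = 2 * ff - 2 * ff * (1 - 2 * Fc) ^ 3" by algebra
  finally show ?thesis .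
qed

end

context msym begin

interpretation prob_space M by (rule probM)
interpretation PS: product_sigma_finite "\<lambda>_::nat. M"
  by standard
interpretation PP: prob_space P by (rule prob_space_PiM) (simp add: probM)

lemma Wsum_meas:
  assumes A: "A \<in> sets borel"
  shows "(\<lambda>xs. \<Sum>i<4. win_prob 4 xs i * indicator A (xs i)) \<in> borel_measurable P"
proof (rule borel_measurable_sum)
  fix i :: nat assume i: "i \<in> {..<4}"
  have [measurable]: "(\<lambda>xs. xs i) \<in> borel_measurable P" "(\<lambda>xs. win_prob 4 xs i) \<in> borel_measurable P"
    using i win_meas_P[OF sM, of i 4] by auto
  show "(\<lambda>xs. win_prob 4 xs i * indicator A (xs i)) \<in> borel_measurable P" using A by measurable
qed

lemma Wsum_bnd: "0 \<le> (\<Sum>i<4. win_prob 4 xs i * indicator A (xs i))"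
     "(\<Sum>i<4. win_prob 4 xs i * indicator A (xs i)) \<le> (1::real)"
proof -
  show "0 \<le> (\<Sum>i<4. win_prob 4 xs i * indicator A (xs i))"
    by (intro sum_nonneg) (simp add: win_nonneg)
  have "(\<Sum>i<4. win_prob 4 xs i * indicator A (xs i)) \<le> (\<Sum>i<4. win_prob 4 xs i)"
    by (intro sum_mono) (auto simp: indicator_def win_nonneg)
  also have "\<dots> = 1" by (rule win_sum) simp
  finally show "(\<Sum>i<4. win_prob 4 xs i * indicator A (xs i)) \<le> (1::real)" .
qed

lemma Wsum_int: assumes A: "A \<in> sets borel"
  shows "integrable P (\<lambda>xs. \<Sum>i<4. win_prob 4 xs i * indicator A (xs i))"
  by (rule PP.integrable_const_bound[where B=1]) (use Wsum_bnd[of _ A] Wsum_meas[OF A] in auto)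

lemma step_emeasure_int:
  assumes A: "A \<in> sets borel"
  shows "emeasure (plurality_step 4 M) A = ennreal (\<integral>xs. (\<Sum>i<4. win_prob 4 xs i * indicator A (xs i)) \<partial>P)"
  unfolding step_emeasure[OF sM A]
  by (rule nn_integral_eq_integral[OF Wsum_int[OF A]]) (use Wsum_bnd in auto)

lemma step_measure_int:
  assumes A: "A \<in> sets borel"
  shows "measure (plurality_step 4 M) A = (\<integral>xs. (\<Sum>i<4. win_prob 4 xs i * indicator A (xs i)) \<partial>P)"
proof -
  have "0 \<le> (\<integral>xs. (\<Sum>i<4. win_prob 4 xs i * indicator A (xs i)) \<partial>P)"
    by (intro integral_nonneg_AE) (use Wsum_bnd in auto)
  then show ?thesis using step_emeasure_int[OF A] by (simp add: measure_def)
qed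

end

context stepx begin

interpretation prob_space M by (rule probM)
interpretation PS: product_sigma_finite "\<lambda>_::nat. M"
  by standard
interpretation PP: prob_space P by (rule prob_space_PiM) (simp add: probM)

lemma W_flip: "(\<Sum>i<4. win_prob 4 (flip {..<4} xs) i * lL (flip {..<4} xs i)) = (\<Sum>i<4. win_prob 4 xs i * lR (xs i))"
proof (intro sum.cong refl)
  fix i assume i: "i \<in> {..<4::nat}"
  have "win_prob 4 (flip {..<4} xs) i = win_prob 4 (\<lambda>j. 1 - xs j) i"
    by (rule win_cong) (simp add: flip_def)
  also have "\<dots> = win_prob 4 xs i" by (rule win_reflect)
  finally show "win_prob 4 (flip {..<4} xs) i * lL (flip {..<4} xs i) = win_prob 4 xs i * lR (xs i)"
    using i by (simp add: flip_def lL_refl)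
qed

lemma one_step_int:
  "(\<integral>xs. (\<Sum>i<4. win_prob 4 xs i * lL (xs i)) \<partial>P) \<le> ff - ff * (1 - 2 * Fc) ^ 3"
proof -
  have AL: "{..x} \<in> sets borel" and AR: "{1-x..} \<in> sets borel" by auto
  have iL: "integrable P (\<lambda>xs. \<Sum>i<4. win_prob 4 xs i * lL (xs i))"
    using Wsum_int[OF AL] by (simp add: lL_def)
  have iR: "integrable P (\<lambda>xs. \<Sum>i<4. win_prob 4 xs i * lR (xs i))"
    using Wsum_int[OF AR] by (simp add: lR_def)
  have mL: "(\<lambda>xs. \<Sum>i<4. win_prob 4 xs i * lL (xs i)) \<in> borel_measurable P"
    using Wsum_meas[OF AL] by (simp add: lL_def)
  have eqLR: "(\<integral>xs. (\<Sum>i<4. win_prob 4 xs i * lR (xs i)) \<partial>P) = (\<integral>xs. (\<Sum>i<4. win_prob 4 xs i * lL (xs i)) \<partial>P)"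
    using integral_flip[of "{..<4}" "\<lambda>xs. \<Sum>i<4. win_prob 4 xs i * lL (xs i)", OF _ mL] by (simp add: W_flip)
  have iU: "integrable P U"
  proof -
    have "U = (\<lambda>xs. 1 - (\<Prod>i<4. 1 - lR (xs i)) - (\<Prod>i<4. 1 - lL (xs i)) + (\<Prod>i<4. lI (xs i))
      + (\<Prod>i<4. lL (xs i)) + (\<Prod>i<4. lR (xs i)) + (\<Sum>a<4. KL a xs + KR a xs))" by (simp add: U_expand fun_eq_iff)
    moreover have "integrable P \<dots>"
      using prod_int[of "\<lambda>y. 1 - lR y"] prod_int[of "\<lambda>y. 1 - lL y"] prod_int[of lI] prod_int[of lL] prod_int[of lR]
        Bochner_Integration.integrable_sum[where f="\<lambda>a xs. KL a xs + KR a xs" and I="{..<4}" and M=P]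
        KL_int KR_int bnd1 by (auto simp: PP.prob_space)
    ultimately show ?thesis by simp
  qed
  have "(\<integral>xs. (\<Sum>i<4. win_prob 4 xs i * lL (xs i)) \<partial>P) + (\<integral>xs. (\<Sum>i<4. win_prob 4 xs i * lR (xs i)) \<partial>P)
      = (\<integral>xs. (\<Sum>i<4. win_prob 4 xs i * (lL (xs i) + lR (xs i))) \<partial>P)"
    using iL iR by (simp add: sum.distrib algebra_simps)
  also have "\<dots> \<le> (\<integral>xs. U xs \<partial>P)"
  proof (rule integral_mono_AE)
    show "integrable P (\<lambda>xs. \<Sum>i<4. win_prob 4 xs i * (lL (xs i) + lR (xs i)))"
      using iL iR by (simp add: sum.distrib algebra_simps)
    show "integrable P U" by (rule iU)
    show "AE xs in P. (\<Sum>i<4. win_prob 4 xs i * (lL (xs i) + lR (xs i))) \<le> U xs"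
      using AE_Good by eventually_elim (rule claim1)
  qed
  also have "\<dots> \<le> 2 * ff - 2 * ff * (1 - 2 * Fc) ^ 3" by (rule int_U)
  finally show ?thesis using eqLR by linarith
qed

lemma one_step:
  "measure (plurality_step 4 M) {..x} \<le> measure M {..x} * (1 - 4 * (1/2 - measure M {..x/3 + 1/3}) ^ 3)"
proof -
  have "measure (plurality_step 4 M) {..x} = (\<integral>xs. (\<Sum>i<4. win_prob 4 xs i * lL (xs i)) \<partial>P)"
    by (subst step_measure_int) (auto simp: lL_def)
  also have "\<dots> \<le> ff - ff * (1 - 2 * Fc) ^ 3" by (rule one_step_int)
  also have "\<dots> = ff - 8 * ff * (1/2 - Fc) ^ 3" by (simp add: power3_eq_cube algebra_simps)
  also have "\<dots> \<le> ff - 4 * ff * (1/2 - Fc) ^ 3"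
  proof -
    have "0 \<le> ff * (1/2 - Fc) ^ 3" using ff_ge Fc_le by (intro mult_nonneg_nonneg zero_le_power) auto
    thus ?thesis by linarith
  qed
  also have "\<dots> = measure M {..x} * (1 - 4 * (1/2 - measure M {..x/3 + 1/3}) ^ 3)"
    by (simp add: ff_def Fc_def cc_def algebra_simps)
  finally show ?thesis .
qed

end

context msym begin

interpretation prob_space M by (rule probM)
interpretation PS: product_sigma_finite "\<lambda>_::nat. M"
  by standard
interpretation PP: prob_space P by (rule prob_space_PiM) (simp add: probM)

abbreviation G where "G \<equiv> plurality_step 4 M"

lemma sG: "sets G = sets borel" by (rule step_sets)
lemma spG: "space G = UNIV" using sets_eq_imp_space_eq[OF sG] by simp

lemma Wsum_one: "(\<Sum>i<4. win_prob 4 xs i * indicator UNIV (xs i)) = (1::real)"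
  using win_sum[of 4 xs] by simp

lemma probG: "prob_space G"
proof (rule prob_spaceI)
  have "emeasure G UNIV = ennreal (\<integral>xs. (\<Sum>i<4. win_prob 4 xs i * indicator UNIV (xs i)) \<partial>P)"
    by (rule step_emeasure_int) simp
  also have "\<dots> = 1" by (simp only: Wsum_one) (simp add: PP.prob_space)
  finally show "emeasure G (space G) = 1" by (simp add: spG)
qed

lemma G01: "measure G {0..1} = 1"
proof -
  have "measure G {0..1} = (\<integral>xs. (\<Sum>i<4. win_prob 4 xs i * indicator {0..1} (xs i)) \<partial>P)"
    by (rule step_measure_int) simp
  also have "\<dots> = (\<integral>xs. 1 \<partial>P)"
  proof (rule integral_cong_AE)
    show "(\<lambda>xs. \<Sum>i<4. win_prob 4 xs i * indicator {0..1} (xs i)) \<in> borel_measurable P"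
      by (rule Wsum_meas) simp
    show "(\<lambda>xs. 1::real) \<in> borel_measurable P" by simp
    have "AE xs in P. \<forall>i\<in>{..<4}. 0 \<le> xs i \<and> xs i \<le> 1"
      by (intro eventually_ball_finite ballI AE_range) auto
    then show "AE xs in P. (\<Sum>i<4. win_prob 4 xs i * indicator {0..1} (xs i)) = 1"
    proof eventually_elim
      case (elim xs)
      then have "(\<Sum>i<4. win_prob 4 xs i * indicator {0..1} (xs i)) = (\<Sum>i<4. win_prob 4 xs i)"
        by (intro sum.cong refl) (auto simp: indicator_def)
      then show ?case using win_sum[of 4 xs] by simp
    qed
  qed
  also have "\<dots> = 1" by (simp add: PP.prob_space)
  finally show ?thesis .
qed

lemma win_flip_all: "win_prob 4 (flip {..<4} xs) i = win_prob 4 xs i"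
proof -
  have "win_prob 4 (flip {..<4} xs) i = win_prob 4 (\<lambda>j. 1 - xs j) i"
    by (rule win_cong) (simp add: flip_def)
  also have "\<dots> = win_prob 4 xs i" by (rule win_reflect)
  finally show ?thesis .
qed

lemma flip_all_app: "i \<in> {..<4} \<Longrightarrow> flip {..<4} xs i = 1 - xs i"
  by (simp add: flip_def)

lemma Gsym: "distr G borel (\<lambda>y. 1 - y) = G"
proof (rule measure_eqI)
  show "sets (distr G borel (\<lambda>y. 1 - y)) = sets G" by (simp add: sG)
  fix A assume "A \<in> sets (distr G borel (\<lambda>y. 1 - y))"
  then have A: "A \<in> sets borel" by simp
  have fA: "(\<lambda>y::real. 1 - y) -` A \<in> sets borel"
    using measurable_sets[of "\<lambda>y::real. 1 - y" borel borel A] A by simp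
  have "emeasure (distr G borel (\<lambda>y. 1 - y)) A = emeasure G ((\<lambda>y. 1 - y) -` A)"
    by (subst emeasure_distr) (auto simp: A spG measurable_cong_sets[OF sG refl])
  also have "\<dots> = ennreal (\<integral>xs. (\<Sum>i<4. win_prob 4 xs i * indicator ((\<lambda>y. 1 - y) -` A) (xs i)) \<partial>P)"
    by (rule step_emeasure_int[OF fA])
  also have "(\<integral>xs. (\<Sum>i<4. win_prob 4 xs i * indicator ((\<lambda>y. 1 - y) -` A) (xs i)) \<partial>P)
      = (\<integral>xs. (\<Sum>i<4. win_prob 4 (flip {..<4} xs) i * indicator A (flip {..<4} xs i)) \<partial>P)"
    by (intro Bochner_Integration.integral_cong refl sum.cong) (auto simp: win_flip_all flip_all_app indicator_def)
  also have "\<dots> = (\<integral>xs. (\<Sum>i<4. win_prob 4 xs i * indicator A (xs i)) \<partial>P)"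
    by (rule integral_flip[where f="\<lambda>xs. \<Sum>i<4. win_prob 4 xs i * indicator A (xs i)"]) (simp, rule Wsum_meas[OF A])
  also have "ennreal \<dots> = emeasure G A" by (rule step_emeasure_int[OF A, symmetric])
  finally show "emeasure (distr G borel (\<lambda>y. 1 - y)) A = emeasure G A" .
qed

lemma Gatom: "measure G {y} = 0"
proof -
  have "measure G {y} = (\<integral>xs. (\<Sum>i<4. win_prob 4 xs i * indicator {y} (xs i)) \<partial>P)"
    by (rule step_measure_int) simp
  also have "\<dots> \<le> (\<integral>xs. (\<Sum>i<4. indicator {y} (xs i)) \<partial>P)"
  proof (rule integral_mono)
    show "integrable P (\<lambda>xs. \<Sum>i<4. win_prob 4 xs i * indicator {y} (xs i))" by (rule Wsum_int) simp
    show "integrable P (\<lambda>xs. \<Sum>i<4. indicator {y} (xs i) :: real)"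
    proof (rule Bochner_Integration.integrable_sum[where f="\<lambda>i xs. indicator {y} (xs i) :: real"])
      fix i :: nat assume i: "i \<in> {..<4}"
      have [measurable]: "(\<lambda>xs. xs i) \<in> borel_measurable P" using i by auto
      show "integrable P (\<lambda>xs. indicator {y} (xs i) :: real)"
        by (rule PP.integrable_const_bound[where B=1]) auto
    qed
    fix xs show "(\<Sum>i<4. win_prob 4 xs i * indicator {y} (xs i)) \<le> (\<Sum>i<4. indicator {y} (xs i) :: real)"
      by (intro sum_mono) (auto simp: indicator_def win_le1)
  qed
  also have "\<dots> = (\<Sum>i<4. \<integral>xs. indicator {y} (xs i) \<partial>P)"
  proof (rule Bochner_Integration.integral_sum[where f="\<lambda>i xs. indicator {y} (xs i) :: real"])
    fix i :: nat assume i: "i \<in> {..<4}"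
    have [measurable]: "(\<lambda>xs. xs i) \<in> borel_measurable P" using i by auto
    show "integrable P (\<lambda>xs. indicator {y} (xs i) :: real)"
      by (rule PP.integrable_const_bound[where B=1]) auto
  qed
  also have "\<dots> = (\<Sum>i<4::nat. measure M {y})"
  proof (intro sum.cong refl)
    fix i :: nat assume "i \<in> {..<4}"
    then show "(\<integral>xs. indicator {y} (xs i) \<partial>P) = measure M {y}"
      using integral_coord[of i "indicator {y}"] by simp
  qed
  also have "\<dots> = 0" by (simp add: Matom)
  finally show ?thesis using measure_nonneg[of G "{y}"] by linarith
qed

lemma step_calF: "plurality_step 4 M \<in> calF"
  unfolding calF_def using probG sG G01 Gsym Gatom by auto

end

lemma iter_calF: "F0 \<in> calF \<Longrightarrow> (plurality_step 4 ^^ t) F0 \<in> calF"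
proof (induction t)
  case (Suc t)
  then interpret msym "(plurality_step 4 ^^ t) F0" by unfold_locales
  show ?case using step_calF by simp
qed simp


lemma step_at:
  assumes F: "F \<in> calF" and y1: "1/3 < y" and y2: "y < 1/2"
  shows "measure (plurality_step 4 F) {..y} \<le> measure F {..y} * (1 - 4 * (1/2 - measure F {..y/3 + 1/3}) ^ 3)"
proof -
  interpret stepx F y using F y1 y2 by unfold_locales
  show ?thesis by (rule one_step)
qed

lemma half_at:
  assumes F: "F \<in> calF" and y1: "1/3 < y" and y2: "y < 1/2"
  shows "measure F {..y/3 + 1/3} \<le> 1/2"
proof -
  interpret stepx F y using F y1 y2 by unfold_locales
  show ?thesis using Fc_le by (simp add: Fc_def cc_def)
qed

theorem mainTheorem5:
  fixes F0 :: "real measure" and x :: real and t :: nat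
  assumes "F0 \<in> calF" and "1/3 < x" and "x < 1/2"
  shows "replicator_cdf 4 t F0 x
           \<le> measure F0 {..x} * (1 - 4 * (1/2 - measure F0 {..x/3 + 1/3}) ^ 3) ^ t"
proof -
  define Ft where "Ft t = (plurality_step 4 ^^ t) F0" for t
  have cal: "Ft t \<in> calF" for t unfolding Ft_def by (rule iter_calF[OF assms(1)])
  have FtS: "Ft (Suc t) = plurality_step 4 (Ft t)" for t by (simp add: Ft_def)
  define c where "c = x/3 + 1/3"
  have c1: "1/3 < c" and c2: "c < 1/2" using assms by (auto simp: c_def)
  have monoc: "measure (Ft t) {..c} \<le> measure F0 {..c}" for t
  proof (induction t)
    case 0 then show ?case by (simp add: Ft_def)
  next
    case (Suc t)
    have h: "measure (Ft t) {..c/3 + 1/3} \<le> 1/2" by (rule half_at[OF cal c1 c2])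
    have "0 \<le> (1/2 - measure (Ft t) {..c/3 + 1/3}) ^ 3" using h by simp
    then have f1: "1 - 4 * (1/2 - measure (Ft t) {..c/3 + 1/3}) ^ 3 \<le> 1" by linarith
    have "measure (Ft (Suc t)) {..c} \<le> measure (Ft t) {..c} * (1 - 4 * (1/2 - measure (Ft t) {..c/3 + 1/3}) ^ 3)"
      unfolding FtS by (rule step_at[OF cal c1 c2])
    also have "\<dots> \<le> measure (Ft t) {..c} * 1"
      by (rule mult_left_mono[OF f1]) simp
    finally show ?case using Suc by simp
  qed
  define K where "K = 1 - 4 * (1/2 - measure F0 {..c}) ^ 3"
  have h0: "measure F0 {..c} \<le> 1/2" using half_at[OF assms] by (simp add: c_def)
  have K0: "0 \<le> K"
  proof -
    have a: "0 \<le> 1/2 - measure F0 {..c}" "1/2 - measure F0 {..c} \<le> 1/2" using h0 by auto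
    have "(1/2 - measure F0 {..c}) ^ 3 \<le> (1/2) ^ 3" by (rule power_mono) (use a in auto)
    moreover have "((1::real)/2) ^ 3 = 1/8" by (simp add: power3_eq_cube)
    ultimately show ?thesis unfolding K_def by linarith
  qed
  have main: "measure (Ft t) {..x} \<le> measure F0 {..x} * K ^ t" for t
  proof (induction t)
    case 0 then show ?case by (simp add: Ft_def)
  next
    case (Suc t)
    have ht: "measure (Ft t) {..c} \<le> 1/2" using monoc[of t] h0 by linarith
    have "(1/2 - measure F0 {..c}) ^ 3 \<le> (1/2 - measure (Ft t) {..c}) ^ 3"
      by (rule power_mono) (use monoc[of t] h0 in auto)
    then have fk: "1 - 4 * (1/2 - measure (Ft t) {..c}) ^ 3 \<le> K" by (simp add: K_def)
    have "measure (Ft (Suc t)) {..x} \<le> measure (Ft t) {..x} * (1 - 4 * (1/2 - measure (Ft t) {..x/3 + 1/3}) ^ 3)"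
      unfolding FtS by (rule step_at[OF cal assms(2,3)])
    also have "\<dots> = measure (Ft t) {..x} * (1 - 4 * (1/2 - measure (Ft t) {..c}) ^ 3)" by (simp add: c_def)
    also have "\<dots> \<le> measure (Ft t) {..x} * K" by (rule mult_left_mono[OF fk]) simp
    also have "\<dots> \<le> (measure F0 {..x} * K ^ t) * K" by (rule mult_right_mono[OF Suc K0])
    finally show ?case by (simp add: algebra_simps)
  qed
  show ?thesis using main[of t] by (simp add: replicator_cdf_def Ft_def K_def c_def)
qed


end
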